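(* Let $s\in\mathbb{R}$, $u_0\in H^s(\mathbb{R}^d;\mathbb{R}^d)$ and $v_0\in H^{s-\alpha}(\mathbb{R}^d;\mathbb{R}^d)$. For $\delta>0$ let $u_\delta$ be the function with $\widehat{u_\delta(t,\cdot)}=\cos(\omega_\delta(\cdot)t)\hat u_0+\frac{\sin(\omega_\delta(\cdot)t)}{\omega_\delta(\cdot)}\hat v_0$ (the unique distributional solution in $C([0,\infty);H^s)\cap C^1((0,\infty);H^{s-\alpha})$ of the linear peridynamics model $\partial_{tt}u-K_\delta[u]=0$ with data $(u_0,v_0)$), and let $u$ be the function with $\widehat{u(t,\cdot)}=\cos(\gamma|\cdot|t)\hat u_0+\frac{\sin(\gamma|\cdot|t)}{\gamma|\cdot|}\hat v_0$ (the unique distributional solution in $C([0,\infty);H^s)\cap C^1((0,\infty);H^{s-1})$ of the wave equation $\partial_{tt}u-\gamma^2\Delta u=0$ with data $(u_0,v_0)$). Then for every $T\in[0,+\infty)$, $$\lim_{\delta\to0}\sup_{t\in[0,T]}\Big(\|u_\delta(t,\cdot)-u(t,\cdot)\|_{H^s(\mathbb{R}^d;\mathbb{R}^d)}+\|\partial_tu_\delta(t,\cdot)-\partial_tu(t,\cdot)\|_{H^{s-1}(\mathbb{R}^d;\mathbb{R}^d)}\Big)=0.$$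
   Context: Fix $d\ge1$, $\kappa\in(0,\infty)$, $\alpha\in(0,1)$, and $\chi\in L^\infty(\mathbb{R})$ with $\operatorname{supp}\chi\subset[-1,1]$, $0\le\chi\le1$, $\chi\equiv1$ on $[-\tfrac12,\tfrac12]$. For $\delta>0$ let $\chi_\delta(y)=\chi(|y|/\delta)$. $K_\delta[u](x)=-\frac{\kappa}{\delta^{2(1-\alpha)}}\,\mathrm{p.v.}\!\int\chi_\delta(y)\frac{u(x)-u(x-y)}{|y|^{d+2\alpha}}dy$. Fourier transform $\hat u(\xi)=(2\pi)^{-d/2}\int u(x)e^{-ix\cdot\xi}dx$, taken in $x$ for time-dependent functions. $\omega_\delta(\xi)=\big(\frac{\kappa}{\delta^{2(1-\alpha)}}\int_{\mathbb{R}^d}\chi_\delta(y)\frac{1-\cos(y\cdot\xi)}{|y|^{d+2\alpha}}dy\big)^{1/2}$, and $\sin(\omega_\delta t)/\omega_\delta$, $\sin(\gamma|\xi|t)/(\gamma|\xi|)$ equal $t$ at $\xi=0$. The constant $\gamma=\big(\frac{\kappa}{2}\mathcal L^d(B_1)\int_0^1\chi(\rho)\rho^{1-2\alpha}d\rho\big)^{1/2}$, where $\mathcal L^d(B_1)$ is the volume of the unit ball in $\mathbb{R}^d$. $H^s(\mathbb{R}^d;\mathbb{R}^d)=\{u\in\mathscr S':(1+|\xi|^2)^{s/2}\hat u\in L^2\}$ with norm equivalent to $\|(1+|\xi|^2)^{s/2}\hat u\|_{L^2}$. *)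

theory Defs
  imports "HOL-Analysis.Analysis"
begin

text \<open>Everything is expressed on the Fourier side. A vector field
  u : R^d -> R^d is represented by its Fourier transform
  hat u : R^d -> C^d (dimension d = CARD('d)).\<close>

definition Hs_normsq :: "real \<Rightarrow> (real^'d \<Rightarrow> complex^'d) \<Rightarrow> ennreal" where
  "Hs_normsq s f = (\<integral>\<^sup>+ \<xi>. ennreal ((1 + (norm \<xi>)\<^sup>2) powr s * (norm (f \<xi>))\<^sup>2) \<partial>lborel)"

definition in_Hs :: "real \<Rightarrow> (real^'d \<Rightarrow> complex^'d) \<Rightarrow> bool" where
  "in_Hs s f \<longleftrightarrow> f \<in> borel_measurable lborel \<and> Hs_normsq s f < \<infinity>"

definition Hs_norm :: "real \<Rightarrow> (real^'d \<Rightarrow> complex^'d) \<Rightarrow> real" where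
  "Hs_norm s f = sqrt (enn2real (Hs_normsq s f))"

text \<open>hat f is the Fourier transform of a real-valued (R^d-valued) function:
  hat f(-xi) = conj(hat f(xi)) componentwise, a.e.\<close>
definition real_valued_hat :: "(real^'d \<Rightarrow> complex^'d) \<Rightarrow> bool" where
  "real_valued_hat f \<longleftrightarrow> (AE \<xi> in lborel. f (- \<xi>) = (\<chi> i. cnj (f \<xi> $ i)))"

definition omega :: "real \<Rightarrow> real \<Rightarrow> (real \<Rightarrow> real) \<Rightarrow> real \<Rightarrow> real^'d \<Rightarrow> real" where
  "omega \<kappa> \<alpha> chi \<delta> \<xi> = sqrt (\<kappa> / \<delta> powr (2 * (1 - \<alpha>)) *
     (\<integral> y. chi (norm y / \<delta>) * (1 - cos (y \<bullet> \<xi>)) / norm y powr (real CARD('d) + 2 * \<alpha>) \<partial>lborel))"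

definition gamma_const :: "'d::finite itself \<Rightarrow> real \<Rightarrow> real \<Rightarrow> (real \<Rightarrow> real) \<Rightarrow> real" where
  "gamma_const _ \<kappa> \<alpha> chi = sqrt (\<kappa> / 2 * measure lborel (ball (0::real^'d) 1) *
     (LINT \<rho>:{0..1}|lborel. chi \<rho> * \<rho> powr (1 - 2 * \<alpha>)))"

definition sin_div :: "real \<Rightarrow> real \<Rightarrow> real" where
  "sin_div w t = (if w = 0 then t else sin (w * t) / w)"

definition sol_hat :: "(real^'d \<Rightarrow> real) \<Rightarrow> (real^'d \<Rightarrow> complex^'d) \<Rightarrow> (real^'d \<Rightarrow> complex^'d)
    \<Rightarrow> real \<Rightarrow> real^'d \<Rightarrow> complex^'d" where
  "sol_hat w u0 v0 t \<xi> = cos (w \<xi> * t) *\<^sub>R u0 \<xi> + sin_div (w \<xi>) t *\<^sub>R v0 \<xi>"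

definition sol_dt_hat :: "(real^'d \<Rightarrow> real) \<Rightarrow> (real^'d \<Rightarrow> complex^'d) \<Rightarrow> (real^'d \<Rightarrow> complex^'d)
    \<Rightarrow> real \<Rightarrow> real^'d \<Rightarrow> complex^'d" where
  "sol_dt_hat w u0 v0 t \<xi> = (- (w \<xi> * sin (w \<xi> * t))) *\<^sub>R u0 \<xi> + cos (w \<xi> * t) *\<^sub>R v0 \<xi>"

end

theory Submission
  imports Defs
begin

lemma card_pos_d: "CARD('d::finite) \<ge> 1"
proof -
  have "0 < CARD('d)" by simp
  then show ?thesis by simp
qed

lemma radial_measure:
  "distr (lborel::(real^'d) measure) borel norm =
     density lborel (\<lambda>\<rho>. ennreal (indicator {0<..} \<rho> *
        (real CARD('d) * unit_ball_vol (real CARD('d)) * \<rho>^(CARD('d)-1))))"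
  (is "?M = ?N")
proof -
  define n where "n = CARD('d)"
  define V where "V = unit_ball_vol (real CARD('d))"
  define F where "F r = V * (max r 0)^n" for r :: real
  have V: "V > 0" unfolding V_def by simp
  have n1: "n \<ge> 1" unfolding n_def by (rule card_pos_d)
  have Fmono: "F a \<le> F b" if "a \<le> b" for a b
    unfolding F_def using V that by (intro mult_left_mono power_mono) auto
  have M_Ioc: "emeasure ?M {a<..b} = ennreal (F b - F a)" if ab: "a \<le> b" for a b
  proof -
    have "emeasure ?M {a<..b} = emeasure lborel {z::real^'d. a < norm z \<and> norm z \<le> b}"
      by (subst emeasure_distr) (auto intro!: arg_cong2[where f=emeasure])
    also have "\<dots> = ennreal (F b - F a)"
    proof (cases "a < 0")
      case True
      then have eq: "{z::real^'d. a < norm z \<and> norm z \<le> b} = cball 0 b"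
        by (auto simp: cball_def dist_norm intro: less_le_trans[OF _ norm_ge_zero])
      show ?thesis
      proof (cases "b < 0")
        case True
        then have "cball (0::real^'d) b = {}" by auto
        then show ?thesis using True \<open>a < 0\<close> ab by (simp add: eq F_def)
      next
        case False
        then show ?thesis unfolding eq using \<open>a<0\<close> n1
          by (subst emeasure_cball) (auto simp: F_def V_def n_def)
      qed
    next
      case False
      then have eq: "{z::real^'d. a < norm z \<and> norm z \<le> b} = cball 0 b - cball 0 a"
        by (auto simp: cball_def dist_norm)
      have "emeasure lborel (cball (0::real^'d) b - cball 0 a) =
            emeasure lborel (cball (0::real^'d) b) - emeasure lborel (cball (0::real^'d) a)"
        using False ab by (intro emeasure_Diff) (auto simp: emeasure_cball)
      also have "\<dots> = ennreal (F b - F a)"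
        using False ab V
        by (simp add: emeasure_cball F_def V_def n_def ennreal_minus power_mono)
      finally show ?thesis unfolding eq .
    qed
    finally show ?thesis .
  qed
  have N_Ioc: "emeasure ?N {a<..b} = ennreal (F b - F a)" if ab: "a \<le> b" for a b
  proof -
    define a' where "a' = max a 0"
    define b' where "b' = max b 0"
    have "emeasure ?N {a<..b} = (\<integral>\<^sup>+\<rho>. ennreal (indicator {0<..} \<rho> *
        (real n * V * \<rho>^(n-1))) * indicator {a<..b} \<rho> \<partial>lborel)"
      by (subst emeasure_density) (auto simp: n_def V_def)
    also have "\<dots> = (\<integral>\<^sup>+\<rho>. ennreal (real n * V * \<rho>^(n-1)) * indicator {a'..b'} \<rho> \<partial>lborel)"
    proof (rule nn_integral_cong_AE)
      have "AE \<rho> in lborel. \<rho> \<notin> {a', 0}"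
        by (intro AE_not_in countable_imp_null_set_lborel) auto
      then show "AE \<rho> in lborel. ennreal (indicator {0<..} \<rho> * (real n * V * \<rho> ^ (n - 1))) * indicator {a<..b} \<rho> =
         ennreal (real n * V * \<rho> ^ (n - 1)) * indicator {a'..b'} \<rho>"
        by eventually_elim (auto simp: a'_def b'_def indicator_def)
    qed
    also have "\<dots> = ennreal (V * b'^n - V * a'^n)"
      using ab V
      by (intro nn_integral_FTC_Icc) (auto simp: a'_def b'_def intro!: derivative_eq_intros)
    also have "\<dots> = ennreal (F b - F a)" by (simp add: F_def a'_def b'_def)
    finally show ?thesis .
  qed
  show ?thesis
  proof (rule measure_eqI_generator_eq[where E="range (\<lambda>(a, b). {a <.. b::real})" and \<Omega>=UNIV
        and A="\<lambda>i. {- real i <.. real i}"])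
    show "Int_stable (range (\<lambda>(a, b). {a <.. b::real}))"
      by (auto simp: Int_stable_def)
    show "range (\<lambda>(a, b). {a <.. b::real}) \<subseteq> Pow UNIV" by auto
    show "sets ?M = sigma_sets UNIV (range (\<lambda>(a, b). {a <.. b::real}))"
      by (simp add: borel_sigma_sets_Ioc)
    show "sets ?N = sigma_sets UNIV (range (\<lambda>(a, b). {a <.. b::real}))"
      by (simp add: borel_sigma_sets_Ioc)
    show "range (\<lambda>i. {- real i <.. real i}) \<subseteq> range (\<lambda>(a, b). {a <.. b::real})" by auto
    show "(\<Union>i. {- real i <.. real i}) = UNIV"
      by (auto simp: minus_less_iff) (metis gt_ex reals_Archimedean2 abs_le_iff le_less_trans linorder_not_le order_less_imp_le)
    show "emeasure ?M {- real i <.. real i} \<noteq> \<infinity>" for i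
      by (subst M_Ioc) auto
    show "emeasure ?M X = emeasure ?N X" if "X \<in> range (\<lambda>(a, b). {a <.. b::real})" for X
    proof -
      obtain a b where X: "X = {a<..b}" using \<open>X \<in> _\<close> by auto
      show ?thesis
      proof (cases "a \<le> b")
        case True then show ?thesis unfolding X using M_Ioc[OF True] N_Ioc[OF True]
          by (simp only: n_def V_def)
      next
        case False then show ?thesis unfolding X by simp
      qed
    qed
  qed
qed


lemma Basis_cart_range: "(Basis :: (real^'d) set) = range (\<lambda>i. axis i 1)"
  by (auto simp: Basis_vec_def)

lemma prod_Basis_cart: "(\<Prod>b\<in>(Basis :: (real^'d) set). f b) = (\<Prod>i\<in>UNIV. f (axis i 1))"
  unfolding Basis_cart_range
  by (subst prod.reindex) (auto simp: inj_on_def axis_eq_axis)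

lemma coord_map_measurable[measurable]:
  "(\<lambda>z::real^'d. \<chi> i. s i * z $ p i) \<in> borel_measurable borel"
proof -
  have "continuous_on UNIV (\<lambda>z::real^'d. \<chi> i. s i * z $ p i)"
    by (intro continuous_on_vec_lambda continuous_intros)
  then show ?thesis by (rule borel_measurable_continuous_onI)
qed

lemma lborel_coord_map:
  fixes p :: "'d::finite \<Rightarrow> 'd" and s :: "'d \<Rightarrow> real"
  assumes p: "bij p" and s: "\<And>i. s i = 1 \<or> s i = -1"
  shows "distr lborel borel (\<lambda>z::real^'d. \<chi> i. s i * z $ p i) = lborel"
proof (rule lborel_eqI[symmetric])
  let ?T = "\<lambda>z::real^'d. \<chi> i. s i * z $ p i"
  fix l u :: "real^'d"
  assume le: "\<And>b. b \<in> Basis \<Longrightarrow> l \<bullet> b \<le> u \<bullet> b"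
  have le': "l $ i \<le> u $ i" for i
    using le[of "axis i 1"] by (simp add: inner_axis)
  define lo where "lo i = (if s i = 1 then l $ i else - u $ i)" for i
  define hi where "hi i = (if s i = 1 then u $ i else - l $ i)" for i
  define q where "q = inv p"
  have pq: "p (q j) = j" for j unfolding q_def by (rule surj_f_inv_f[OF bij_is_surj[OF p]])
  have qp: "q (p i) = i" for i unfolding q_def by (rule inv_f_f[OF bij_is_inj[OF p]])
  define L where "L = (\<chi> j. lo (q j))"
  define U where "U = (\<chi> j. hi (q j))"
  have pre: "?T -` box l u = box L U"
  proof (rule set_eqI)
    fix z :: "real^'d"
    have "z \<in> ?T -` box l u \<longleftrightarrow> (\<forall>i. l $ i < s i * z $ p i \<and> s i * z $ p i < u $ i)"
      by (simp add: mem_box_cart)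
    also have "\<dots> \<longleftrightarrow> (\<forall>i. lo i < z $ p i \<and> z $ p i < hi i)"
      apply (intro all_cong1)
      subgoal for i using s[of i] by (auto simp: lo_def hi_def)
      done
    also have "\<dots> \<longleftrightarrow> (\<forall>j. lo (q j) < z $ j \<and> z $ j < hi (q j))"
      by (metis pq qp)
    also have "\<dots> \<longleftrightarrow> z \<in> box L U"
      by (simp add: mem_box_cart L_def U_def)
    finally show "z \<in> ?T -` box l u \<longleftrightarrow> z \<in> box L U" .
  qed
  have hl: "lo i \<le> hi i" for i using le'[of i] s[of i] by (auto simp: lo_def hi_def)
  have "emeasure (distr lborel borel ?T) (box l u) = emeasure lborel (?T -` box l u)"
    by (subst emeasure_distr) auto
  also have "\<dots> = emeasure lborel (box L U)" by (simp add: pre)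
  also have "\<dots> = (\<Prod>b\<in>Basis. (U - L) \<bullet> b)"
    by (subst emeasure_lborel_box_eq) (auto simp: Basis_cart_range inner_axis L_def U_def hl)
  also have "\<dots> = (\<Prod>j\<in>UNIV. hi (q j) - lo (q j))"
    by (simp add: prod_Basis_cart inner_axis L_def U_def)
  also have "\<dots> = (\<Prod>i\<in>UNIV. hi i - lo i)"
  proof -
    have "bij q" unfolding q_def using p by (rule bij_imp_bij_inv)
    then show ?thesis
      by (subst prod.reindex_bij_betw[where h=q, symmetric]) auto
  qed
  also have "\<dots> = (\<Prod>i\<in>UNIV. u $ i - l $ i)"
    apply (intro arg_cong[where f=ennreal] prod.cong refl)
    subgoal for i using s[of i] by (auto simp: lo_def hi_def)
    done
  also have "\<dots> = (\<Prod>b\<in>Basis. (u - l) \<bullet> b)"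
    by (simp add: prod_Basis_cart inner_axis)
  finally show "emeasure (distr lborel borel ?T) (box l u) = (\<Prod>b\<in>Basis. (u - l) \<bullet> b)"
    by simp
qed simp

lemma integral_coord_map:
  fixes p :: "'d::finite \<Rightarrow> 'd" and s :: "'d \<Rightarrow> real" and f :: "real^'d \<Rightarrow> real"
  assumes p: "bij p" and s: "\<And>i. s i = 1 \<or> s i = -1" and f[measurable]: "f \<in> borel_measurable borel"
  shows "(\<integral>z. f (\<chi> i. s i * z $ p i) \<partial>lborel) = (\<integral>z. f z \<partial>lborel)"
proof -
  have "(\<integral>z. f z \<partial>lborel) = (\<integral>z. f z \<partial>distr lborel borel (\<lambda>z::real^'d. \<chi> i. s i * z $ p i))"
    by (simp add: lborel_coord_map[OF p s])
  also have "\<dots> = (\<integral>z. f (\<chi> i. s i * z $ p i) \<partial>lborel)"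
    by (subst integral_distr) auto
  finally show ?thesis by simp
qed

lemma norm_coord_map:
  fixes p :: "'d::finite \<Rightarrow> 'd" and s :: "'d \<Rightarrow> real"
  assumes p: "bij p" and s: "\<And>i. s i = 1 \<or> s i = -1"
  shows "norm (\<chi> i. s i * z $ p i) = norm (z::real^'d)"
proof -
  have "(\<Sum>i\<in>UNIV. (s i * z $ p i)\<^sup>2) = (\<Sum>i\<in>UNIV. (z $ p i)\<^sup>2)"
    apply (intro sum.cong refl)
    subgoal for i using s[of i] by auto
    done
  also have "\<dots> = (\<Sum>i\<in>UNIV. (z $ i)\<^sup>2)"
    using sum.reindex_bij_betw[of p UNIV UNIV "\<lambda>i. (z $ i)\<^sup>2"] p by simp
  finally show ?thesis by (simp add: norm_vec_def L2_set_def)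
qed

lemma vec_nth_measurable[measurable]: "(\<lambda>z::real^'d. z $ i) \<in> borel_measurable borel"
  by (intro borel_measurable_continuous_onI continuous_intros)

lemma norm_sq_cart: "(norm (z::real^'d))\<^sup>2 = (\<Sum>i\<in>UNIV. z $ i * z $ i)"
  by (simp add: power2_norm_eq_inner inner_vec_def)

lemma bij_swap_fun: "bij (\<lambda>k::'d. if k = i then j else if k = j then i else k)"
  by (rule o_bij[where g="\<lambda>k::'d. if k = i then j else if k = j then i else k"]) (auto simp: fun_eq_iff)

lemma sym_radial:
  fixes h :: "real \<Rightarrow> real" and \<xi> :: "real^'d"
  assumes h[measurable]: "h \<in> borel_measurable borel"
    and int: "integrable lborel (\<lambda>z::real^'d. h (norm z) * (norm z)\<^sup>2)"
  shows "(\<integral>z. h (norm z) * (z \<bullet> \<xi>)\<^sup>2 \<partial>lborel) =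
         (norm \<xi>)\<^sup>2 / real CARD('d) * (\<integral>z. h (norm z) * (norm z)\<^sup>2 \<partial>(lborel::(real^'d) measure))"
proof -
  define M where "M i j = (\<integral>z. h (norm z) * (z$i * z$j) \<partial>(lborel::(real^'d) measure))" for i j :: 'd
  have intij: "integrable lborel (\<lambda>z::real^'d. h (norm z) * (z$i * z$j))" for i j :: 'd
  proof (rule Bochner_Integration.integrable_bound[OF int])
    show "(\<lambda>z::real^'d. h (norm z) * (z $ i * z $ j)) \<in> borel_measurable lborel" by measurable
    show "AE z in lborel. norm (h (norm z) * (z $ i * z $ j)) \<le> norm (h (norm z) * (norm z)\<^sup>2)"
    proof (intro AE_I2)
      fix z :: "real^'d"
      have "\<bar>z$i * z$j\<bar> \<le> norm z * norm z"
        using component_le_norm_cart[of z i] component_le_norm_cart[of z j]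
        by (simp add: abs_mult mult_mono)
      then show "norm (h (norm z) * (z $ i * z $ j)) \<le> norm (h (norm z) * (norm z)\<^sup>2)"
        by (simp add: abs_mult power2_eq_square mult_left_mono)
    qed
  qed
  have off: "M i j = 0" if "i \<noteq> j" for i j :: 'd
  proof -
    let ?s = "\<lambda>k. if k = i then -1 else 1 :: real"
    let ?T = "\<lambda>z::real^'d. (\<chi> k. ?s k * z $ id k)::real^'d"
    have s: "?s k = 1 \<or> ?s k = -1" for k by auto
    have A: "(\<integral>z. h (norm (?T z)) * ((?T z) $ i * (?T z) $ j) \<partial>lborel) = M i j"
      unfolding M_def by (rule integral_coord_map[OF bij_id s]) measurable
    have nc: "norm (?T z) = norm z" for z
      using norm_coord_map[OF bij_id s, where z=z] by simp
    have eq: "(\<lambda>z. h (norm (?T z)) * ((?T z) $ i * (?T z) $ j)) = (\<lambda>z. - (h (norm z) * (z$i * z$j)))"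
      using that by (auto simp: fun_eq_iff nc[simplified])
    have "M i j = (\<integral>z. - (h (norm z) * (z$i * z$j)) \<partial>lborel)"
      using A unfolding eq by simp
    also have "\<dots> = - M i j" unfolding M_def by simp
    finally show ?thesis by simp
  qed
  have diag: "M i i = M j j" for i j :: 'd
  proof -
    let ?p = "\<lambda>k::'d. if k = i then j else if k = j then i else k"
    let ?s = "\<lambda>k. 1 :: real"
    have s: "?s k = 1 \<or> ?s k = -1" for k by auto
    have "(\<integral>z. h (norm ((\<chi> k. ?s k * z $ ?p k)::real^'d)) * ((\<chi> k. ?s k * z $ ?p k) $ i * (\<chi> k. ?s k * z $ ?p k) $ i) \<partial>lborel)
        = M i i"
      unfolding M_def by (rule integral_coord_map[OF bij_swap_fun s]) measurable
    moreover have "(\<lambda>z::real^'d. h (norm (\<chi> k. ?s k * z $ ?p k)) * ((\<chi> k. ?s k * z $ ?p k) $ i * (\<chi> k. ?s k * z $ ?p k) $ i))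
        = (\<lambda>z. h (norm z) * (z$j * z$j))"
    proof -
      have nc: "norm ((\<chi> k. ?s k * z $ ?p k)::real^'d) = norm z" for z
        using norm_coord_map[OF bij_swap_fun s, where z=z] by simp
      show ?thesis by (auto simp: fun_eq_iff nc[simplified])
    qed
    ultimately show ?thesis unfolding M_def by simp
  qed
  obtain k :: 'd where True by simp
  have Msum: "(\<Sum>i\<in>UNIV. \<Sum>j\<in>UNIV. c i j * M i j) = (\<Sum>i\<in>UNIV. c i i) * M k k" for c
  proof -
    have "(\<Sum>i\<in>UNIV. \<Sum>j\<in>UNIV. c i j * M i j) = (\<Sum>i\<in>UNIV. \<Sum>j\<in>UNIV. if j = i then c i i * M k k else 0)"
      apply (intro sum.cong refl)
      subgoal for i j using diag[of i k] off[of i j] by (cases "j = i") auto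
      done
    also have "\<dots> = (\<Sum>i\<in>UNIV. c i i) * M k k"
      by (simp add: sum_distrib_right)
    finally show ?thesis .
  qed
  have 1: "(\<integral>z. h (norm z) * (z \<bullet> \<xi>)\<^sup>2 \<partial>lborel) = (\<Sum>i\<in>UNIV. \<Sum>j\<in>UNIV. (\<xi>$i * \<xi>$j) * M i j)"
  proof -
    have "(\<lambda>z::real^'d. h (norm z) * (z \<bullet> \<xi>)\<^sup>2) = (\<lambda>z. \<Sum>i\<in>UNIV. \<Sum>j\<in>UNIV. (\<xi>$i * \<xi>$j) * (h (norm z) * (z$i * z$j)))"
      by (auto simp: fun_eq_iff inner_vec_def power2_eq_square sum_product sum_distrib_left algebra_simps)
    then show ?thesis
      unfolding M_def using intij
      by (simp add: integral_sum integrable_sum)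
  qed
  have 2: "(\<integral>z. h (norm z) * (norm z)\<^sup>2 \<partial>(lborel::(real^'d) measure)) = real CARD('d) * M k k"
  proof -
    have eq: "(\<lambda>z::real^'d. h (norm z) * (norm z)\<^sup>2) = (\<lambda>z. \<Sum>i\<in>UNIV. h (norm z) * (z$i * z$i))"
      by (auto simp: fun_eq_iff norm_sq_cart sum_distrib_left)
    have "(\<integral>z. h (norm z) * (norm z)\<^sup>2 \<partial>(lborel::(real^'d) measure)) = (\<Sum>i\<in>UNIV. M i i)"
    proof -
      have "(\<integral>z. (\<Sum>i\<in>UNIV. h (norm z) * (z$i * z$i)) \<partial>(lborel::(real^'d) measure)) = (\<Sum>i\<in>UNIV. M i i)"
        unfolding M_def by (rule Bochner_Integration.integral_sum) (rule intij)
      then show ?thesis using arg_cong[OF eq, of "integral\<^sup>L lborel"] by simp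
    qed
    also have "\<dots> = (\<Sum>i\<in>(UNIV::'d set). M k k)"
      by (intro sum.cong refl) (rule diag)
    finally show ?thesis by simp
  qed
  have n: "real CARD('d) > 0" by simp
  show ?thesis
    unfolding 1 2 Msum using n
    using norm_sq_cart[of \<xi>] by (simp add: power2_eq_square)
qed


lemma radial_nn:
  fixes f :: "real \<Rightarrow> ennreal"
  assumes [measurable]: "f \<in> borel_measurable borel"
  shows "(\<integral>\<^sup>+z. f (norm z) \<partial>(lborel::(real^'d) measure)) =
    (\<integral>\<^sup>+\<rho>. ennreal (indicator {0<..} \<rho> * (real CARD('d) * unit_ball_vol (real CARD('d)) * \<rho>^(CARD('d)-1))) * f \<rho> \<partial>lborel)"
proof -
  have "(\<integral>\<^sup>+z. f (norm z) \<partial>(lborel::(real^'d) measure)) = (\<integral>\<^sup>+\<rho>. f \<rho> \<partial>distr (lborel::(real^'d) measure) borel norm)"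
    by (subst nn_integral_distr) auto
  also have "\<dots> = (\<integral>\<^sup>+\<rho>. ennreal (indicator {0<..} \<rho> * (real CARD('d) * unit_ball_vol (real CARD('d)) * \<rho>^(CARD('d)-1))) * f \<rho> \<partial>lborel)"
    unfolding radial_measure by (subst nn_integral_density) auto
  finally show ?thesis .
qed

lemma powr_int01:
  assumes "0 < \<alpha>" "\<alpha> < 1"
  shows "(\<integral>\<^sup>+\<rho>. ennreal (indicator {0..1} \<rho> * \<rho> powr (1 - 2*\<alpha>)) \<partial>lborel) = ennreal (1 / (2 - 2*\<alpha>))"
proof -
  have e: "1 powr (1 - 2*\<alpha> + 1) / (1 - 2*\<alpha> + 1) = 1/(2-2*\<alpha>)" by simp
  have hi: "((\<lambda>x. x powr (1 - 2*\<alpha>)) has_integral (1/(2-2*\<alpha>))) {0..1}"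
    using has_integral_powr_from_0[of "1-2*\<alpha>" 1] assms unfolding e by auto
  then have hU': "((\<lambda>x. if x \<in> {0..1} then x powr (1-2*\<alpha>) else 0) has_integral (1/(2-2*\<alpha>))) UNIV"
    by (simp only: has_integral_restrict_UNIV)
  have feq: "(\<lambda>x. indicator {0..1} x * x powr (1 - 2*\<alpha>)) = (\<lambda>x. if x \<in> {0..1} then x powr (1 - 2*\<alpha>) else 0)"
    by (auto simp: fun_eq_iff indicator_def)
  have hU: "((\<lambda>x. indicator {0..1} x * x powr (1 - 2*\<alpha>)) has_integral (1/(2-2*\<alpha>))) UNIV"
    unfolding feq by (rule hU')
  show ?thesis
    by (rule nn_integral_has_integral_lborel[OF _ _ hU]) auto
qed

lemma pow_alg:
  assumes "\<rho> > 0" "n \<ge> 1"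
  shows "\<rho>^(n-1) * \<rho>\<^sup>2 / \<rho> powr (real n + 2*\<alpha>) = \<rho> powr (1 - 2*\<alpha>)"
proof -
  have "\<rho>^(n-1) * \<rho>\<^sup>2 = \<rho>^(n+1)"
    using assms by (simp add: power_add[symmetric])
  also have "\<dots> = \<rho> powr (real n + 1)"
    using powr_realpow[OF assms(1), of "n+1"] by (simp add: add.commute)
  finally show ?thesis
    using assms by (simp add: powr_diff[symmetric])
qed

lemma radial_main:
  fixes g :: "real \<Rightarrow> real" and \<alpha> :: real
  assumes g[measurable]: "g \<in> borel_measurable borel"
    and g0: "\<And>\<rho>. 0 \<le> g \<rho>" and g1: "\<And>\<rho>. g \<rho> \<le> 1" and gsupp: "\<And>\<rho>. \<rho> > 1 \<Longrightarrow> g \<rho> = 0"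
    and \<alpha>: "0 < \<alpha>" "\<alpha> < 1"
  shows "(\<integral>\<^sup>+z. ennreal (g (norm z) * (norm z)\<^sup>2 / norm z powr (real CARD('d) + 2*\<alpha>)) \<partial>(lborel::(real^'d) measure))
       = ennreal (real CARD('d) * unit_ball_vol (real CARD('d)) *
            (\<integral>\<rho>. indicator {0<..} \<rho> * g \<rho> * \<rho> powr (1 - 2*\<alpha>) \<partial>lborel))"
    and "integrable (lborel::(real^'d) measure) (\<lambda>z. g (norm z) * (norm z)\<^sup>2 / norm z powr (real CARD('d) + 2*\<alpha>))"
    and "integrable lborel (\<lambda>\<rho>. indicator {0<..} \<rho> * g \<rho> * \<rho> powr (1 - 2*\<alpha>))"
proof -
  define n where "n = CARD('d)"
  define V where "V = unit_ball_vol (real CARD('d))"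
  define h where "h \<rho> = indicator {0<..} \<rho> * g \<rho> * \<rho> powr (1 - 2*\<alpha>)" for \<rho> :: real
  have n1: "n \<ge> 1" unfolding n_def by (rule card_pos_d)
  have V: "V > 0" unfolding V_def by simp
  have hm[measurable]: "h \<in> borel_measurable borel" unfolding h_def by measurable
  have h0: "0 \<le> h \<rho>" for \<rho> unfolding h_def using g0 by (simp add: indicator_def)
  have hle: "h \<rho> \<le> indicator {0..1} \<rho> * \<rho> powr (1 - 2*\<alpha>)" for \<rho>
    unfolding h_def using g0 g1 gsupp[of \<rho>]
    by (cases "\<rho> > 1"; cases "\<rho> > 0") (auto simp: indicator_def)
  have hfin: "(\<integral>\<^sup>+\<rho>. ennreal (h \<rho>) \<partial>lborel) < \<infinity>"
  proof -
    have "(\<integral>\<^sup>+\<rho>. ennreal (h \<rho>) \<partial>lborel) \<le> (\<integral>\<^sup>+\<rho>. ennreal (indicator {0..1} \<rho> * \<rho> powr (1 - 2*\<alpha>)) \<partial>lborel)"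
      by (intro nn_integral_mono) (simp add: hle)
    also have "\<dots> = ennreal (1 / (2 - 2*\<alpha>))" by (rule powr_int01[OF \<alpha>])
    finally show ?thesis by (simp add: le_less_trans)
  qed
  have hint: "integrable lborel h"
    by (rule integrableI_nonneg) (use hfin h0 in auto)
  have hlam: "h = (\<lambda>\<rho>. indicator {0<..} \<rho> * g \<rho> * \<rho> powr (1 - 2*\<alpha>))"
    by (rule ext) (simp add: h_def)
  show "integrable lborel (\<lambda>\<rho>. indicator {0<..} \<rho> * g \<rho> * \<rho> powr (1 - 2*\<alpha>))"
    using hint unfolding hlam .
  have "(\<integral>\<^sup>+z. ennreal (g (norm z) * (norm z)\<^sup>2 / norm z powr (real CARD('d) + 2*\<alpha>)) \<partial>(lborel::(real^'d) measure))
      = (\<integral>\<^sup>+\<rho>. ennreal (indicator {0<..} \<rho> * (real n * V * \<rho>^(n-1))) *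
            ennreal (g \<rho> * \<rho>\<^sup>2 / \<rho> powr (real CARD('d) + 2*\<alpha>)) \<partial>lborel)"
    unfolding n_def V_def by (rule radial_nn) measurable
  also have "\<dots> = (\<integral>\<^sup>+\<rho>. ennreal (real n * V) * ennreal (h \<rho>) \<partial>lborel)"
  proof (intro nn_integral_cong)
    fix \<rho> :: real
    show "ennreal (indicator {0<..} \<rho> * (real n * V * \<rho>^(n-1))) * ennreal (g \<rho> * \<rho>\<^sup>2 / \<rho> powr (real CARD('d) + 2*\<alpha>))
        = ennreal (real n * V) * ennreal (h \<rho>)"
    proof (cases "\<rho> > 0")
      case True
      have "ennreal (indicator {0<..} \<rho> * (real n * V * \<rho>^(n-1))) * ennreal (g \<rho> * \<rho>\<^sup>2 / \<rho> powr (real CARD('d) + 2*\<alpha>))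
          = ennreal ((real n * V * \<rho>^(n-1)) * (g \<rho> * \<rho>\<^sup>2 / \<rho> powr (real n + 2*\<alpha>)))"
        using True V g0[of \<rho>] by (simp add: ennreal_mult'[symmetric] n_def)
      also have "(real n * V * \<rho>^(n-1)) * (g \<rho> * \<rho>\<^sup>2 / \<rho> powr (real n + 2*\<alpha>))
          = (real n * V) * (g \<rho> * (\<rho>^(n-1) * \<rho>\<^sup>2 / \<rho> powr (real n + 2*\<alpha>)))"
        by (simp add: mult_ac)
      also have "\<dots> = (real n * V) * h \<rho>"
        unfolding pow_alg[OF True n1] using True by (simp add: h_def)
      finally show ?thesis using V h0[of \<rho>] by (simp add: ennreal_mult)
    next
      case False
      then show ?thesis by (simp add: h_def)
    qed
  qed
  also have "\<dots> = ennreal (real n * V) * ennreal (\<integral>\<rho>. h \<rho> \<partial>lborel)"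
    by (subst nn_integral_cmult) (auto simp: nn_integral_eq_integral[OF hint] h0)
  also have "\<dots> = ennreal (real n * V * (\<integral>\<rho>. h \<rho> \<partial>lborel))"
  proof -
    have I0: "0 \<le> (\<integral>\<rho>. h \<rho> \<partial>lborel)" by (rule Bochner_Integration.integral_nonneg) (simp add: h0)
    show ?thesis using V I0 by (simp add: ennreal_mult)
  qed
  finally show eq: "(\<integral>\<^sup>+z. ennreal (g (norm z) * (norm z)\<^sup>2 / norm z powr (real CARD('d) + 2*\<alpha>)) \<partial>(lborel::(real^'d) measure))
       = ennreal (real CARD('d) * unit_ball_vol (real CARD('d)) *
            (\<integral>\<rho>. indicator {0<..} \<rho> * g \<rho> * \<rho> powr (1 - 2*\<alpha>) \<partial>lborel))"
    by (simp add: n_def V_def hlam)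
  show "integrable (lborel::(real^'d) measure) (\<lambda>z. g (norm z) * (norm z)\<^sup>2 / norm z powr (real CARD('d) + 2*\<alpha>))"
    by (rule integrableI_nonneg) (use eq g0 in auto)
qed


lemma one_minus_cos_le: "1 - cos x \<le> x\<^sup>2 / (2::real)"
proof -
  have *: "1 - cos x \<le> x\<^sup>2 / 2" if "x \<ge> 0" for x :: real
  proof -
    let ?f = "\<lambda>x. cos x - 1 + x\<^sup>2 / 2"
    have "?f 0 \<le> ?f x"
      by (rule DERIV_nonneg_imp_nondecreasing[OF that])
         (auto intro!: exI derivative_eq_intros simp: sin_x_le_x)
    then show ?thesis by simp
  qed
  show ?thesis
  proof (cases "x \<ge> 0")
    case True then show ?thesis by (rule *)
  next
    case False then show ?thesis using *[of "-x"] by simp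
  qed
qed

lemma sin_ge_cubic: "x \<ge> 0 \<Longrightarrow> x - x^3 / 6 \<le> sin (x::real)"
proof -
  assume x: "x \<ge> 0"
  let ?f = "\<lambda>x. sin x - x + x^3 / 6"
  have "?f 0 \<le> ?f x"
  proof (rule DERIV_nonneg_imp_nondecreasing[OF x])
    fix t :: real assume "0 \<le> t" "t \<le> x"
    show "\<exists>y. (?f has_real_derivative y) (at t) \<and> 0 \<le> y"
      using one_minus_cos_le[of t]
      by (intro exI conjI) (rule derivative_eq_intros refl | simp add: power2_eq_square)+
  qed
  then show ?thesis by simp
qed

lemma one_minus_cos_ge: "x\<^sup>2 / 2 - x^4 / 24 \<le> 1 - cos (x::real)"
proof -
  have *: "x\<^sup>2 / 2 - x^4 / 24 \<le> 1 - cos x" if "x \<ge> 0" for x :: real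
  proof -
    let ?f = "\<lambda>x. 1 - x\<^sup>2 / 2 + x^4 / 24 - cos x"
    have "?f 0 \<le> ?f x"
    proof (rule DERIV_nonneg_imp_nondecreasing[OF that])
      fix t :: real assume "0 \<le> t" "t \<le> x"
      then show "\<exists>y. (?f has_real_derivative y) (at t) \<and> 0 \<le> y"
        using sin_ge_cubic[of t]
        by (intro exI conjI) (rule derivative_eq_intros refl | simp add: power2_eq_square power3_eq_cube)+
    qed
    then show ?thesis by simp
  qed
  show ?thesis
  proof (cases "x \<ge> 0")
    case True then show ?thesis by (rule *)
  next
    case False then show ?thesis using *[of "-x"] by simp
  qed
qed

lemma one_minus_cos_ge_quarter: "\<bar>x\<bar> \<le> 1 \<Longrightarrow> x\<^sup>2 / 4 \<le> 1 - cos (x::real)"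
proof -
  assume "\<bar>x\<bar> \<le> 1"
  then have "x\<^sup>2 \<le> 1" using abs_square_le_1[of x] by simp
  then have "x^4 \<le> x\<^sup>2"
    using mult_left_mono[OF \<open>x\<^sup>2 \<le> 1\<close>, of "x\<^sup>2"] by (simp add: power4_eq_xxxx power2_eq_square mult.assoc)
  then have "x^4 / 24 \<le> x\<^sup>2 / 4"
    using zero_le_power2[of x] by linarith
  with one_minus_cos_ge[of x] show ?thesis by simp
qed

lemma cos_quot_lim:
  fixes S :: "nat \<Rightarrow> real" and x :: real
  assumes "S \<longlonglongrightarrow> 0" "\<And>k. S k \<noteq> 0"
  shows "(\<lambda>k. (1 - cos (S k * x)) / (S k)\<^sup>2) \<longlonglongrightarrow> x\<^sup>2 / 2"
proof (rule tendsto_sandwich[where f="\<lambda>k. x\<^sup>2 / 2 - (S k)\<^sup>2 * x^4 / 24" and h="\<lambda>k. x\<^sup>2/2"])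
  show "\<forall>\<^sub>F k in sequentially. x\<^sup>2 / 2 - (S k)\<^sup>2 * x ^ 4 / 24 \<le> (1 - cos (S k * x)) / (S k)\<^sup>2"
  proof (intro always_eventually allI)
    fix k
    have p: "(S k)\<^sup>2 > 0" using assms(2)[of k] by simp
    have "(S k * x)\<^sup>2 / 2 - (S k * x)^4 / 24 \<le> 1 - cos (S k * x)" by (rule one_minus_cos_ge)
    then have "(S k)\<^sup>2 * (x\<^sup>2 / 2 - (S k)\<^sup>2 * x ^ 4 / 24) \<le> 1 - cos (S k * x)"
      by (simp add: power_mult_distrib power4_eq_xxxx power2_eq_square algebra_simps)
    then show "x\<^sup>2 / 2 - (S k)\<^sup>2 * x ^ 4 / 24 \<le> (1 - cos (S k * x)) / (S k)\<^sup>2"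
      using p by (simp add: field_simps)
  qed
  show "\<forall>\<^sub>F k in sequentially. (1 - cos (S k * x)) / (S k)\<^sup>2 \<le> x\<^sup>2 / 2"
  proof (intro always_eventually allI)
    fix k
    have p: "(S k)\<^sup>2 > 0" using assms(2)[of k] by simp
    have "1 - cos (S k * x) \<le> (S k * x)\<^sup>2 / 2" by (rule one_minus_cos_le)
    then show "(1 - cos (S k * x)) / (S k)\<^sup>2 \<le> x\<^sup>2 / 2"
      using p by (simp add: field_simps power_mult_distrib)
  qed
  show "(\<lambda>k. x\<^sup>2 / 2 - (S k)\<^sup>2 * x ^ 4 / 24) \<longlonglongrightarrow> x\<^sup>2 / 2"
    using assms(1) by (auto intro!: tendsto_eq_intros)
qed simp

lemma powr_int_r:
  fixes \<alpha> r :: real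
  assumes "0 < \<alpha>" "\<alpha> < 1" "0 < r"
  shows "(\<integral>\<rho>. indicator {0<..} \<rho> * indicator {..r} \<rho> * \<rho> powr (1 - 2*\<alpha>) \<partial>lborel) = r powr (2 - 2*\<alpha>) / (2 - 2*\<alpha>)"
proof -
  have e: "r powr (1 - 2*\<alpha> + 1) / (1 - 2*\<alpha> + 1) = r powr (2 - 2*\<alpha>) / (2 - 2*\<alpha>)" by simp
  have hi: "((\<lambda>x. x powr (1 - 2*\<alpha>)) has_integral (r powr (2 - 2*\<alpha>) / (2 - 2*\<alpha>))) {0..r}"
    using has_integral_powr_from_0[of "1-2*\<alpha>" r] assms unfolding e by auto
  then have hU': "((\<lambda>x. if x \<in> {0..r} then x powr (1-2*\<alpha>) else 0) has_integral (r powr (2 - 2*\<alpha>) / (2 - 2*\<alpha>))) UNIV"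
    by (simp only: has_integral_restrict_UNIV)
  have feq: "(\<lambda>x. indicator {0<..} x * indicator {..r} x * x powr (1 - 2*\<alpha>)) = (\<lambda>x. if x \<in> {0..r} then x powr (1 - 2*\<alpha>) else 0)"
    by (auto simp: fun_eq_iff indicator_def)
  have hU: "((\<lambda>x. indicator {0<..} x * indicator {..r} x * x powr (1 - 2*\<alpha>)) has_integral (r powr (2 - 2*\<alpha>) / (2 - 2*\<alpha>))) UNIV"
    unfolding feq by (rule hU')
  have nn: "(\<integral>\<^sup>+x. ennreal (indicator {0<..} x * indicator {..r} x * x powr (1 - 2*\<alpha>)) \<partial>lborel) = ennreal (r powr (2 - 2*\<alpha>) / (2 - 2*\<alpha>))"
    by (rule nn_integral_has_integral_lborel[OF _ _ hU]) auto
  show ?thesis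
    by (subst integral_eq_nn_integral) (use assms in \<open>auto simp: nn\<close>)
qed

lemma quad_formula:
  fixes g :: "real \<Rightarrow> real" and \<alpha> :: real and \<xi> :: "real^'d"
  assumes g[measurable]: "g \<in> borel_measurable borel"
    and g0: "\<And>\<rho>. 0 \<le> g \<rho>" and g1: "\<And>\<rho>. g \<rho> \<le> 1" and gsupp: "\<And>\<rho>. \<rho> > 1 \<Longrightarrow> g \<rho> = 0"
    and \<alpha>: "0 < \<alpha>" "\<alpha> < 1"
  shows "(\<integral>z. g (norm z) * (z \<bullet> \<xi>)\<^sup>2 / norm z powr (real CARD('d) + 2*\<alpha>) \<partial>lborel)
       = (norm \<xi>)\<^sup>2 * unit_ball_vol (real CARD('d)) * (\<integral>\<rho>. indicator {0<..} \<rho> * g \<rho> * \<rho> powr (1 - 2*\<alpha>) \<partial>lborel)"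
    and "integrable lborel (\<lambda>z. g (norm z) * (z \<bullet> \<xi>)\<^sup>2 / norm z powr (real CARD('d) + 2*\<alpha>))"
proof -
  let ?p = "real CARD('d) + 2*\<alpha>"
  let ?I = "\<integral>\<rho>. indicator {0<..} \<rho> * g \<rho> * \<rho> powr (1 - 2*\<alpha>) \<partial>lborel"
  define h where "h \<rho> = g \<rho> / \<rho> powr ?p" for \<rho>
  have hm[measurable]: "h \<in> borel_measurable borel" unfolding h_def by measurable
  note rm = radial_main[OF g g0 g1 gsupp \<alpha>]
  have eq1: "(\<lambda>z::real^'d. h (norm z) * (norm z)\<^sup>2) = (\<lambda>z. g (norm z) * (norm z)\<^sup>2 / norm z powr ?p)"
    by (auto simp: h_def fun_eq_iff)
  have eq2: "(\<lambda>z::real^'d. h (norm z) * (z \<bullet> \<xi>)\<^sup>2) = (\<lambda>z. g (norm z) * (z \<bullet> \<xi>)\<^sup>2 / norm z powr ?p)"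
    by (auto simp: h_def fun_eq_iff)
  have int1: "integrable lborel (\<lambda>z::real^'d. h (norm z) * (norm z)\<^sup>2)"
    unfolding eq1 by (rule rm(2))
  have I0: "0 \<le> ?I" by (rule Bochner_Integration.integral_nonneg) (simp add: g0 indicator_def)
  have V0: "0 \<le> unit_ball_vol (real CARD('d))" by simp
  have int_val: "(\<integral>z. g (norm z) * (norm z)\<^sup>2 / norm z powr ?p \<partial>(lborel::(real^'d) measure))
      = real CARD('d) * unit_ball_vol (real CARD('d)) * ?I"
  proof -
    have rm1: "(\<integral>\<^sup>+z. ennreal (g (norm z) * (norm z)\<^sup>2 / norm z powr ?p) \<partial>(lborel::(real^'d) measure))
       = ennreal (real CARD('d) * unit_ball_vol (real CARD('d)) * ?I)"
      by (rule rm(1))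
    show ?thesis
      by (subst integral_eq_nn_integral) (use rm1 I0 V0 g0 in auto)
  qed
  have "(\<integral>z. h (norm z) * (z \<bullet> \<xi>)\<^sup>2 \<partial>lborel) =
       (norm \<xi>)\<^sup>2 / real CARD('d) * (\<integral>z. h (norm z) * (norm z)\<^sup>2 \<partial>(lborel::(real^'d) measure))"
    by (rule sym_radial[OF hm int1])
  then show "(\<integral>z. g (norm z) * (z \<bullet> \<xi>)\<^sup>2 / norm z powr ?p \<partial>lborel) = (norm \<xi>)\<^sup>2 * unit_ball_vol (real CARD('d)) * ?I"
    unfolding eq1 eq2 int_val by simp
  show "integrable lborel (\<lambda>z. g (norm z) * (z \<bullet> \<xi>)\<^sup>2 / norm z powr ?p)"
  proof (rule Bochner_Integration.integrable_bound[where f="\<lambda>z. (norm \<xi>)\<^sup>2 * (g (norm z) * (norm z)\<^sup>2 / norm z powr ?p)"])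
    show "integrable lborel (\<lambda>z::real^'d. (norm \<xi>)\<^sup>2 * (g (norm z) * (norm z)\<^sup>2 / norm z powr ?p))"
    proof -
      have rm2: "integrable (lborel::(real^'d) measure) (\<lambda>z. g (norm z) * (norm z)\<^sup>2 / norm z powr ?p)"
        by (rule rm(2))
      show ?thesis by (rule Bochner_Integration.integrable_mult_right[OF rm2])
    qed
    show "(\<lambda>z::real^'d. g (norm z) * (z \<bullet> \<xi>)\<^sup>2 / norm z powr ?p) \<in> borel_measurable lborel" by measurable
    show "AE z in lborel. norm (g (norm z) * (z \<bullet> \<xi>)\<^sup>2 / norm z powr ?p) \<le> norm ((norm \<xi>)\<^sup>2 * (g (norm z) * (norm z)\<^sup>2 / norm z powr ?p))"
    proof (intro AE_I2)
      fix z :: "real^'d"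
      have cs: "(z \<bullet> \<xi>)\<^sup>2 \<le> (norm z)\<^sup>2 * (norm \<xi>)\<^sup>2"
        using Cauchy_Schwarz_ineq2[of z \<xi>] by (metis abs_le_square_iff abs_norm_cancel norm_mult power_mult_distrib abs_mult)
      have "g (norm z) * (z \<bullet> \<xi>)\<^sup>2 / norm z powr ?p \<le> g (norm z) * ((norm z)\<^sup>2 * (norm \<xi>)\<^sup>2) / norm z powr ?p"
        using cs g0 by (intro divide_right_mono mult_left_mono) auto
      then show "norm (g (norm z) * (z \<bullet> \<xi>)\<^sup>2 / norm z powr ?p) \<le> norm ((norm \<xi>)\<^sup>2 * (g (norm z) * (norm z)\<^sup>2 / norm z powr ?p))"
        using g0 by (simp add: abs_mult mult_ac)
    qed
  qed
qed


lemma nn_scale: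
  fixes f :: "real^'d \<Rightarrow> ennreal" and \<delta> :: real
  assumes [measurable]: "f \<in> borel_measurable borel" and \<delta>: "\<delta> > 0"
  shows "(\<integral>\<^sup>+y. f y \<partial>lborel) = ennreal (\<delta> ^ CARD('d)) * (\<integral>\<^sup>+z. f (\<delta> *\<^sub>R z) \<partial>lborel)"
proof -
  note L = lborel_affine[of \<delta> "0::real^'d"]
  have "(\<integral>\<^sup>+y. f y \<partial>lborel) = (\<integral>\<^sup>+y. f y \<partial>density (distr (lborel::(real^'d) measure) borel (\<lambda>x. 0 + \<delta> *\<^sub>R x)) (\<lambda>_. \<bar>\<delta>\<bar> ^ DIM(real^'d)))"
    using L \<delta> by simp
  also have "\<dots> = (\<integral>\<^sup>+z. ennreal (\<bar>\<delta>\<bar> ^ DIM(real^'d)) * f (\<delta> *\<^sub>R z) \<partial>lborel)"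
    by (subst nn_integral_density) (auto simp: nn_integral_distr)
  also have "\<dots> = ennreal (\<delta> ^ CARD('d)) * (\<integral>\<^sup>+z. f (\<delta> *\<^sub>R z) \<partial>lborel)"
    using \<delta> by (subst nn_integral_cmult) auto
  finally show ?thesis .
qed

lemma pow_exps:
  fixes \<delta> \<kappa> \<alpha> :: real assumes \<delta>: "\<delta> > 0"
  shows "\<kappa> / \<delta> powr (2*(1-\<alpha>)) * (\<delta> ^ n * \<delta> powr (-(real n + 2*\<alpha>))) = \<kappa> / \<delta>\<^sup>2"
proof -
  have a: "\<delta> ^ n = \<delta> powr (real n)" using powr_realpow[OF \<delta>, of n] by simp
  have b: "\<delta> powr (real n) * \<delta> powr (-(real n + 2*\<alpha>)) = \<delta> powr (- 2*\<alpha>)"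
    by (simp add: powr_add[symmetric])
  have c: "\<delta> powr (2*(1-\<alpha>)) = \<delta>\<^sup>2 * \<delta> powr (- 2*\<alpha>)"
  proof -
    have "\<delta> powr (2*(1-\<alpha>)) = \<delta> powr 2 * \<delta> powr (- 2*\<alpha>)"
      by (simp add: powr_add[symmetric] algebra_simps)
    also have "\<delta> powr 2 = \<delta>\<^sup>2" using \<delta> by (simp add: powr_numeral)
    finally show ?thesis .
  qed
  have p: "\<delta> powr (- 2*\<alpha>) > 0" using \<delta> by simp
  show ?thesis unfolding a b c using p \<delta> by (simp add: field_simps)
qed

locale pd =
  fixes \<kappa> \<alpha> :: real and chi :: "real \<Rightarrow> real"
  assumes \<kappa>: "\<kappa> > 0" and \<alpha>0: "0 < \<alpha>" and \<alpha>1: "\<alpha> < 1"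
    and chi_meas[measurable]: "chi \<in> borel_measurable borel"
    and chi0: "\<And>x. 0 \<le> chi x" and chi1: "\<And>x. chi x \<le> 1"
    and chi_out: "\<And>x. \<bar>x\<bar> > 1 \<Longrightarrow> chi x = 0" and chi_in: "\<And>x. \<bar>x\<bar> \<le> 1/2 \<Longrightarrow> chi x = 1"
begin

definition A where "A = (LINT \<rho>:{0..1}|lborel. chi \<rho> * \<rho> powr (1 - 2 * \<alpha>))"

lemma chi_supp: "\<rho> > 1 \<Longrightarrow> chi \<rho> = 0"
  using chi_out[of \<rho>] by simp

lemma A_eq: "A = (\<integral>\<rho>. indicator {0<..} \<rho> * chi \<rho> * \<rho> powr (1 - 2*\<alpha>) \<partial>lborel)"
  unfolding A_def set_lebesgue_integral_def
proof (intro Bochner_Integration.integral_cong refl)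
  fix \<rho> :: real
  show "indicator {0..1} \<rho> *\<^sub>R (chi \<rho> * \<rho> powr (1 - 2 * \<alpha>)) = indicator {0<..} \<rho> * chi \<rho> * \<rho> powr (1 - 2*\<alpha>)"
    using chi_supp[of \<rho>] by (cases "\<rho> < 0"; cases "\<rho> = 0"; cases "\<rho> > 1") (auto simp: indicator_def)
qed

lemma chi_rm:
  "integrable lborel (\<lambda>\<rho>. indicator {0<..} \<rho> * chi \<rho> * \<rho> powr (1 - 2*\<alpha>))"
  by (rule radial_main(3)[OF chi_meas chi0 chi1 chi_supp \<alpha>0 \<alpha>1])

lemma ind_props:
  fixes r :: real
  assumes "r \<le> 1"
  shows "indicator {..r} \<in> borel_measurable borel" "\<And>\<rho>. 0 \<le> (indicator {..r} \<rho> :: real)"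
    "\<And>\<rho>. (indicator {..r} \<rho> :: real) \<le> 1" "\<And>\<rho>. \<rho> > 1 \<Longrightarrow> (indicator {..r} \<rho> :: real) = 0"
proof -
  show "indicator {..r} \<in> borel_measurable borel" by (auto intro!: borel_measurable_indicator borel_closed)
  show "\<And>\<rho>. 0 \<le> (indicator {..r} \<rho> :: real)" "\<And>\<rho>. (indicator {..r} \<rho> :: real) \<le> 1"
    by (auto simp: indicator_def)
  show "\<And>\<rho>. \<rho> > 1 \<Longrightarrow> (indicator {..r} \<rho> :: real) = 0"
    using assms by (auto simp: indicator_def)
qed

lemma A_pos: "A > 0"
proof -
  have h12: "(1/2::real) \<le> 1" by simp
  note ip = ind_props[OF h12]
  have "0 < (1/2) powr (2 - 2*\<alpha>) / (2 - 2*\<alpha>)" using \<alpha>1 by simp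
  also have "\<dots> = (\<integral>\<rho>. indicator {0<..} \<rho> * indicator {..1/2} \<rho> * \<rho> powr (1 - 2*\<alpha>) \<partial>lborel)"
    by (rule powr_int_r[symmetric]) (use \<alpha>0 \<alpha>1 in auto)
  also have "\<dots> \<le> A"
    unfolding A_eq
  proof (rule integral_mono)
    show "integrable lborel (\<lambda>\<rho>. indicator {0<..} \<rho> * indicator {..1/2} \<rho> * \<rho> powr (1 - 2*\<alpha>))"
      by (rule radial_main(3)[OF ip \<alpha>0 \<alpha>1]) simp
    show "integrable lborel (\<lambda>\<rho>. indicator {0<..} \<rho> * chi \<rho> * \<rho> powr (1 - 2*\<alpha>))"
      by (rule chi_rm)
    fix \<rho> :: real
    show "indicator {0<..} \<rho> * indicator {..1/2} \<rho> * \<rho> powr (1 - 2*\<alpha>) \<le> indicator {0<..} \<rho> * chi \<rho> * \<rho> powr (1 - 2*\<alpha>)"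
      using chi_in[of \<rho>] chi0[of \<rho>] by (auto simp: indicator_def)
  qed
  finally show ?thesis .
qed

lemma gamma_sq: "(gamma_const TYPE('d::finite) \<kappa> \<alpha> chi)\<^sup>2 = \<kappa> / 2 * unit_ball_vol (real CARD('d)) * A"
  and gamma_pos: "gamma_const TYPE('d::finite) \<kappa> \<alpha> chi > 0"
proof -
  have m: "measure lborel (ball (0::real^'d) 1) = unit_ball_vol (real CARD('d))"
    by (simp add: measure_def emeasure_ball)
  have pos: "\<kappa> / 2 * unit_ball_vol (real CARD('d)) * A > 0"
    using \<kappa> A_pos by simp
  have g: "gamma_const TYPE('d) \<kappa> \<alpha> chi = sqrt (\<kappa> / 2 * unit_ball_vol (real CARD('d)) * A)"
    unfolding gamma_const_def m A_def ..
  show "(gamma_const TYPE('d::finite) \<kappa> \<alpha> chi)\<^sup>2 = \<kappa> / 2 * unit_ball_vol (real CARD('d)) * A"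
    unfolding g using pos by simp
  show "gamma_const TYPE('d::finite) \<kappa> \<alpha> chi > 0"
    unfolding g using pos by simp
qed

lemma quad_chi:
  fixes \<xi> :: "real^'d"
  shows "(\<integral>z. chi (norm z) * (z \<bullet> \<xi>)\<^sup>2 / norm z powr (real CARD('d) + 2*\<alpha>) \<partial>lborel)
       = (norm \<xi>)\<^sup>2 * unit_ball_vol (real CARD('d)) * A"
    and "integrable lborel (\<lambda>z. chi (norm z) * (z \<bullet> \<xi>)\<^sup>2 / norm z powr (real CARD('d) + 2*\<alpha>))"
  using quad_formula[OF chi_meas chi0 chi1 chi_supp \<alpha>0 \<alpha>1, of \<xi>] by (auto simp: A_eq)

lemma omega_meas:
  "omega \<kappa> \<alpha> chi \<delta> \<in> (borel_measurable borel :: (real^'d \<Rightarrow> real) set)"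
  unfolding omega_def[abs_def] by measurable


lemma omega_sq:
  fixes \<xi> :: "real^'d" assumes \<delta>: "\<delta> > 0"
  shows "(omega \<kappa> \<alpha> chi \<delta> \<xi>)\<^sup>2 = \<kappa> / \<delta>\<^sup>2 *
      (\<integral>z. chi (norm z) * (1 - cos (\<delta> * (z \<bullet> \<xi>))) / norm z powr (real CARD('d) + 2*\<alpha>) \<partial>lborel)"
    and "0 \<le> omega \<kappa> \<alpha> chi \<delta> \<xi>"
proof -
  let ?p = "real CARD('d) + 2*\<alpha>"
  define F where "F y = chi (norm y / \<delta>) * (1 - cos (y \<bullet> \<xi>)) / norm y powr ?p" for y :: "real^'d"
  define G where "G z = chi (norm z) * (1 - cos (\<delta> * (z \<bullet> \<xi>))) / norm z powr ?p" for z :: "real^'d"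
  have Fm[measurable]: "F \<in> borel_measurable borel" unfolding F_def by measurable
  have Gm[measurable]: "G \<in> borel_measurable borel" unfolding G_def by measurable
  have F0: "0 \<le> F y" for y unfolding F_def using chi0 by (auto intro!: divide_nonneg_nonneg mult_nonneg_nonneg)
  have G0: "0 \<le> G y" for y unfolding G_def using chi0 by (auto intro!: divide_nonneg_nonneg mult_nonneg_nonneg)
  have FG: "F (\<delta> *\<^sub>R z) = \<delta> powr (-?p) * G z" for z
  proof -
    have n: "norm (\<delta> *\<^sub>R z) = \<delta> * norm z" using \<delta> by simp
    have pm: "(\<delta> * norm z) powr ?p = \<delta> powr ?p * norm z powr ?p" using \<delta> by (simp add: powr_mult)
    have "F (\<delta> *\<^sub>R z) = chi (norm z) * (1 - cos (\<delta> * (z \<bullet> \<xi>))) / (\<delta> powr ?p * norm z powr ?p)"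
      unfolding F_def n pm using \<delta> by simp
    also have "\<dots> = \<delta> powr (-?p) * G z"
      unfolding G_def powr_minus_divide[of \<delta> ?p] by simp
    finally show ?thesis .
  qed
  have "(\<integral>\<^sup>+y. ennreal (F y) \<partial>lborel) = ennreal (\<delta> ^ CARD('d)) * (\<integral>\<^sup>+z. ennreal (F (\<delta> *\<^sub>R z)) \<partial>lborel)"
    by (rule nn_scale) (auto simp: \<delta>)
  also have "\<dots> = ennreal (\<delta> ^ CARD('d)) * (ennreal (\<delta> powr (-?p)) * (\<integral>\<^sup>+z. ennreal (G z) \<partial>lborel))"
    by (simp add: FG ennreal_mult G0 nn_integral_cmult)
  finally have nnF: "(\<integral>\<^sup>+y. ennreal (F y) \<partial>lborel) = ennreal (\<delta> ^ CARD('d)) * (ennreal (\<delta> powr (-?p)) * (\<integral>\<^sup>+z. ennreal (G z) \<partial>lborel))" .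
  have intF: "(\<integral>y. F y \<partial>lborel) = \<delta> ^ CARD('d) * \<delta> powr (-?p) * (\<integral>z. G z \<partial>lborel)"
    using \<delta> by (simp add: integral_eq_nn_integral F0 G0 nnF enn2real_mult)
  have om: "omega \<kappa> \<alpha> chi \<delta> \<xi> = sqrt (\<kappa> / \<delta> powr (2 * (1 - \<alpha>)) * (\<integral>y. F y \<partial>lborel))"
    by (simp add: omega_def F_def)
  have X: "\<kappa> / \<delta> powr (2 * (1 - \<alpha>)) * (\<integral>y. F y \<partial>lborel) = \<kappa> / \<delta>\<^sup>2 * (\<integral>z. G z \<partial>lborel)"
  proof -
    have "\<kappa> / \<delta> powr (2 * (1 - \<alpha>)) * ((\<delta> ^ CARD('d) * \<delta> powr (-?p)) * (\<integral>z. G z \<partial>lborel))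
        = (\<kappa> / \<delta> powr (2 * (1 - \<alpha>)) * (\<delta> ^ CARD('d) * \<delta> powr (-?p))) * (\<integral>z. G z \<partial>lborel)"
      by (rule mult.assoc[symmetric])
    then show ?thesis unfolding intF pow_exps[OF \<delta>, of \<kappa> \<alpha> "CARD('d)"] .
  qed
  have X0: "0 \<le> \<kappa> / \<delta>\<^sup>2 * (\<integral>z. G z \<partial>lborel)"
    using \<kappa> \<delta> by (intro mult_nonneg_nonneg Bochner_Integration.integral_nonneg) (auto simp: G0)
  show "(omega \<kappa> \<alpha> chi \<delta> \<xi>)\<^sup>2 = \<kappa> / \<delta>\<^sup>2 *
      (\<integral>z. chi (norm z) * (1 - cos (\<delta> * (z \<bullet> \<xi>))) / norm z powr (real CARD('d) + 2*\<alpha>) \<partial>lborel)"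
  proof -
    have Glam: "G = (\<lambda>z. chi (norm z) * (1 - cos (\<delta> * (z \<bullet> \<xi>))) / norm z powr ?p)"
      by (rule ext) (simp add: G_def)
    show ?thesis unfolding om X using X0 unfolding Glam by simp
  qed
  show "0 \<le> omega \<kappa> \<alpha> chi \<delta> \<xi>" unfolding om X using X0 by simp
qed

end


lemma powr_alg2:
  fixes x \<alpha> :: real assumes x: "x > 0"
  shows "x\<^sup>2 * (1 / (2 * x)) powr (2 - 2*\<alpha>) = 2 powr (2*\<alpha> - 2) * x powr (2*\<alpha>)"
proof -
  have "(1 / (2 * x)) powr (2 - 2*\<alpha>) = (2 * x) powr (2*\<alpha> - 2)"
    using x by (simp add: powr_divide powr_minus_divide[symmetric])
  also have "\<dots> = 2 powr (2*\<alpha> - 2) * x powr (2*\<alpha> - 2)"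
    using x by (simp add: powr_mult)
  finally have e: "(1 / (2 * x)) powr (2 - 2*\<alpha>) = 2 powr (2*\<alpha> - 2) * x powr (2*\<alpha> - 2)" .
  have "x\<^sup>2 * x powr (2*\<alpha> - 2) = x powr (2*\<alpha>)"
  proof -
    have "x\<^sup>2 = x powr 2" using x by (simp add: powr_numeral)
    then have "x\<^sup>2 * x powr (2*\<alpha> - 2) = x powr 2 * x powr (2*\<alpha> - 2)" by simp
    also have "\<dots> = x powr (2 + (2*\<alpha> - 2))" by (rule powr_add[symmetric])
    finally show ?thesis by simp
  qed
  then show ?thesis unfolding e by (simp add: mult_ac)
qed

context pd
begin

lemma psi_le:
  "chi (norm z) * (1 - cos (\<delta> * (z \<bullet> \<xi>))) / norm z powr p \<le> \<delta>\<^sup>2/2 * (chi (norm z) * (z \<bullet> \<xi>)\<^sup>2 / norm z powr p)"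
proof -
  have "chi (norm z) * (1 - cos (\<delta> * (z \<bullet> \<xi>))) \<le> chi (norm z) * ((\<delta> * (z \<bullet> \<xi>))\<^sup>2 / 2)"
    using chi0 one_minus_cos_le by (intro mult_left_mono) auto
  then have "chi (norm z) * (1 - cos (\<delta> * (z \<bullet> \<xi>))) / norm z powr p \<le> chi (norm z) * ((\<delta> * (z \<bullet> \<xi>))\<^sup>2 / 2) / norm z powr p"
    by (intro divide_right_mono) auto
  then show ?thesis by (simp add: power_mult_distrib mult_ac)
qed

lemma psi_nonneg: "0 \<le> chi (norm z) * (1 - cos (\<delta> * (z \<bullet> \<xi>))) / norm z powr p"
  using chi0 by (auto intro!: divide_nonneg_nonneg mult_nonneg_nonneg)

lemma psi_int:
  fixes \<xi> :: "real^'d"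
  shows "integrable lborel (\<lambda>z. chi (norm z) * (1 - cos (\<delta> * (z \<bullet> \<xi>))) / norm z powr (real CARD('d) + 2*\<alpha>))"
proof (rule Bochner_Integration.integrable_bound[where f="\<lambda>z. \<delta>\<^sup>2/2 * (chi (norm z) * (z \<bullet> \<xi>)\<^sup>2 / norm z powr (real CARD('d) + 2*\<alpha>))"])
  show "integrable lborel (\<lambda>z. \<delta>\<^sup>2/2 * (chi (norm z) * (z \<bullet> \<xi>)\<^sup>2 / norm z powr (real CARD('d) + 2*\<alpha>)))"
    by (rule Bochner_Integration.integrable_mult_right[OF quad_chi(2)])
  show "(\<lambda>z::real^'d. chi (norm z) * (1 - cos (\<delta> * (z \<bullet> \<xi>))) / norm z powr (real CARD('d) + 2*\<alpha>)) \<in> borel_measurable lborel"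
    by measurable
  show "AE z in lborel. norm (chi (norm z) * (1 - cos (\<delta> * (z \<bullet> \<xi>))) / norm z powr (real CARD('d) + 2*\<alpha>))
      \<le> norm (\<delta>\<^sup>2/2 * (chi (norm z) * (z \<bullet> \<xi>)\<^sup>2 / norm z powr (real CARD('d) + 2*\<alpha>)))"
    using psi_le psi_nonneg chi0 by (intro AE_I2) (auto simp: abs_of_nonneg)
qed

lemma omega_up:
  fixes \<xi> :: "real^'d" assumes \<delta>: "\<delta> > 0"
  shows "omega \<kappa> \<alpha> chi \<delta> \<xi> \<le> gamma_const TYPE('d) \<kappa> \<alpha> chi * norm \<xi>"
proof -
  let ?p = "real CARD('d) + 2*\<alpha>"
  let ?V = "unit_ball_vol (real CARD('d))"
  have "(\<integral>z. chi (norm z) * (1 - cos (\<delta> * (z \<bullet> \<xi>))) / norm z powr ?p \<partial>lborel)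
      \<le> (\<integral>z. \<delta>\<^sup>2/2 * (chi (norm z) * (z \<bullet> \<xi>)\<^sup>2 / norm z powr ?p) \<partial>lborel)"
  proof (rule integral_mono')
    show "integrable lborel (\<lambda>z. \<delta>\<^sup>2/2 * (chi (norm z) * (z \<bullet> \<xi>)\<^sup>2 / norm z powr ?p))"
      by (rule Bochner_Integration.integrable_mult_right[OF quad_chi(2)])
    show "chi (norm z) * (1 - cos (\<delta> * (z \<bullet> \<xi>))) / norm z powr ?p \<le> \<delta>\<^sup>2/2 * (chi (norm z) * (z \<bullet> \<xi>)\<^sup>2 / norm z powr ?p)" for z
      by (rule psi_le)
    show "0 \<le> \<delta>\<^sup>2/2 * (chi (norm z) * (z \<bullet> \<xi>)\<^sup>2 / norm z powr ?p)" for z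
      using chi0 by (auto intro!: divide_nonneg_nonneg mult_nonneg_nonneg)
  qed
  also have "\<dots> = \<delta>\<^sup>2/2 * ((norm \<xi>)\<^sup>2 * ?V * A)"
    by (simp only: Bochner_Integration.integral_mult_right_zero quad_chi(1))
  finally have I: "(\<integral>z. chi (norm z) * (1 - cos (\<delta> * (z \<bullet> \<xi>))) / norm z powr ?p \<partial>lborel) \<le> \<delta>\<^sup>2/2 * ((norm \<xi>)\<^sup>2 * ?V * A)" .
  have "(omega \<kappa> \<alpha> chi \<delta> \<xi>)\<^sup>2 \<le> \<kappa> / \<delta>\<^sup>2 * (\<delta>\<^sup>2/2 * ((norm \<xi>)\<^sup>2 * ?V * A))"
    unfolding omega_sq(1)[OF \<delta>] using \<kappa> \<delta> I by (intro mult_left_mono) auto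
  also have "\<dots> = \<kappa> / 2 * ?V * A * (norm \<xi>)\<^sup>2"
  proof -
    have "\<kappa> / \<delta>\<^sup>2 * (\<delta>\<^sup>2/2 * B) = \<kappa> / 2 * B" for B using \<delta> by simp
    then show ?thesis using \<delta> by (simp add: mult_ac)
  qed
  also have "\<dots> = (gamma_const TYPE('d) \<kappa> \<alpha> chi * norm \<xi>)\<^sup>2"
    by (simp only: power_mult_distrib gamma_sq)
  finally have sq: "(omega \<kappa> \<alpha> chi \<delta> \<xi>)\<^sup>2 \<le> (gamma_const TYPE('d) \<kappa> \<alpha> chi * norm \<xi>)\<^sup>2" .
  have "0 \<le> gamma_const TYPE('d) \<kappa> \<alpha> chi * norm \<xi>"
    using gamma_pos[where 'd='d] by simp
  with sq show ?thesis by (rule power2_le_imp_le)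
qed


lemma omega_low_sq:
  fixes \<xi> :: "real^'d" assumes \<delta>: "\<delta> > 0" and \<xi>: "\<xi> \<noteq> 0"
  defines "r0 \<equiv> min (1/2) (1 / (2 * \<delta> * norm \<xi>))"
  shows "\<kappa> / 4 * (norm \<xi>)\<^sup>2 * unit_ball_vol (real CARD('d)) * (r0 powr (2 - 2*\<alpha>) / (2 - 2*\<alpha>))
           \<le> (omega \<kappa> \<alpha> chi \<delta> \<xi>)\<^sup>2"
proof -
  let ?p = "real CARD('d) + 2*\<alpha>"
  let ?V = "unit_ball_vol (real CARD('d))"
  have r0: "0 < r0" "r0 \<le> 1/2" "r0 \<le> 1 / (2 * \<delta> * norm \<xi>)"
    using \<delta> \<xi> by (auto simp: r0_def)
  have r01: "r0 \<le> 1" using r0 by simp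
  note ip = ind_props[OF r01]
  have "\<delta>\<^sup>2/4 * ((norm \<xi>)\<^sup>2 * ?V * (r0 powr (2 - 2*\<alpha>) / (2 - 2*\<alpha>)))
      = (\<integral>z. \<delta>\<^sup>2/4 * (indicator {..r0} (norm z) * (z \<bullet> \<xi>)\<^sup>2 / norm z powr ?p) \<partial>lborel)"
    using quad_formula(1)[OF ip \<alpha>0 \<alpha>1, of \<xi>] powr_int_r[OF \<alpha>0 \<alpha>1 r0(1)]
    by (simp only: Bochner_Integration.integral_mult_right_zero)
  also have "\<dots> \<le> (\<integral>z. chi (norm z) * (1 - cos (\<delta> * (z \<bullet> \<xi>))) / norm z powr ?p \<partial>lborel)"
  proof (rule integral_mono')
    show "integrable lborel (\<lambda>z. chi (norm z) * (1 - cos (\<delta> * (z \<bullet> \<xi>))) / norm z powr ?p)"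
      by (rule psi_int)
    show "0 \<le> chi (norm z) * (1 - cos (\<delta> * (z \<bullet> \<xi>))) / norm z powr ?p" for z
      by (rule psi_nonneg)
    show "\<delta>\<^sup>2/4 * (indicator {..r0} (norm z) * (z \<bullet> \<xi>)\<^sup>2 / norm z powr ?p)
        \<le> chi (norm z) * (1 - cos (\<delta> * (z \<bullet> \<xi>))) / norm z powr ?p" for z :: "real^'d"
    proof (cases "norm z \<le> r0")
      case True
      have c: "chi (norm z) = 1" using True r0 by (intro chi_in) simp
      have "\<bar>\<delta> * (z \<bullet> \<xi>)\<bar> \<le> \<delta> * (norm z * norm \<xi>)"
        using \<delta> Cauchy_Schwarz_ineq2[of z \<xi>] by (simp add: abs_mult)
      also have "\<dots> \<le> \<delta> * (r0 * norm \<xi>)"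
        using \<delta> True by (intro mult_left_mono mult_right_mono) auto
      also have "\<dots> \<le> \<delta> * (1 / (2 * \<delta> * norm \<xi>) * norm \<xi>)"
        using \<delta> r0(3) by (intro mult_left_mono mult_right_mono) auto
      also have "\<dots> \<le> 1" using \<delta> \<xi> by simp
      finally have "(\<delta> * (z \<bullet> \<xi>))\<^sup>2 / 4 \<le> 1 - cos (\<delta> * (z \<bullet> \<xi>))"
        by (rule one_minus_cos_ge_quarter)
      then have "\<delta>\<^sup>2/4 * (z \<bullet> \<xi>)\<^sup>2 / norm z powr ?p \<le> (1 - cos (\<delta> * (z \<bullet> \<xi>))) / norm z powr ?p"
        by (intro divide_right_mono) (auto simp: power_mult_distrib)
      then show ?thesis using True c by simp
    next
      case False
      then show ?thesis using psi_nonneg[of z \<delta> \<xi> ?p] by simp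
    qed
  qed
  finally have I: "\<delta>\<^sup>2/4 * ((norm \<xi>)\<^sup>2 * ?V * (r0 powr (2 - 2*\<alpha>) / (2 - 2*\<alpha>)))
     \<le> (\<integral>z. chi (norm z) * (1 - cos (\<delta> * (z \<bullet> \<xi>))) / norm z powr ?p \<partial>lborel)" .
  have "\<kappa> / 4 * (norm \<xi>)\<^sup>2 * ?V * (r0 powr (2 - 2*\<alpha>) / (2 - 2*\<alpha>))
      = \<kappa> / \<delta>\<^sup>2 * (\<delta>\<^sup>2/4 * ((norm \<xi>)\<^sup>2 * ?V * (r0 powr (2 - 2*\<alpha>) / (2 - 2*\<alpha>))))"
    using \<delta> by simp
  also have "\<dots> \<le> \<kappa> / \<delta>\<^sup>2 * (\<integral>z. chi (norm z) * (1 - cos (\<delta> * (z \<bullet> \<xi>))) / norm z powr ?p \<partial>lborel)"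
    using I \<kappa> by (intro mult_left_mono) auto
  also have "\<dots> = (omega \<kappa> \<alpha> chi \<delta> \<xi>)\<^sup>2"
    by (rule omega_sq(1)[OF \<delta>, symmetric])
  finally show ?thesis .
qed

lemma omega_pos:
  fixes \<xi> :: "real^'d" assumes \<delta>: "\<delta> > 0" and \<xi>: "\<xi> \<noteq> 0"
  shows "0 < omega \<kappa> \<alpha> chi \<delta> \<xi>"
proof -
  define r0 where "r0 = min (1/2) (1 / (2 * \<delta> * norm \<xi>))"
  have r0: "0 < r0" using \<delta> \<xi> by (auto simp: r0_def)
  have "0 < \<kappa> / 4 * (norm \<xi>)\<^sup>2 * unit_ball_vol (real CARD('d)) * (r0 powr (2 - 2*\<alpha>) / (2 - 2*\<alpha>))"
    using \<kappa> \<xi> r0 \<alpha>1 by simp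
  also have "\<dots> \<le> (omega \<kappa> \<alpha> chi \<delta> \<xi>)\<^sup>2"
    unfolding r0_def by (rule omega_low_sq[OF \<delta> \<xi>])
  finally have "0 < (omega \<kappa> \<alpha> chi \<delta> \<xi>)\<^sup>2" .
  then have "omega \<kappa> \<alpha> chi \<delta> \<xi> \<noteq> 0" by auto
  with omega_sq(2)[OF \<delta>, of \<xi>] show ?thesis by simp
qed

definition c_low :: "'d::finite itself \<Rightarrow> real" where
  "c_low _ = sqrt (\<kappa> / 4 * unit_ball_vol (real CARD('d)) / (2 - 2*\<alpha>) * 2 powr (2*\<alpha> - 2))"

lemma c_low_pos: "c_low TYPE('d::finite) > 0"
  unfolding c_low_def using \<kappa> \<alpha>1 by simp

lemma omega_low:
  fixes \<xi> :: "real^'d" assumes \<delta>: "0 < \<delta>" "\<delta> \<le> 1" and \<xi>: "1 \<le> norm \<xi>"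
  shows "c_low TYPE('d) * norm \<xi> powr \<alpha> \<le> omega \<kappa> \<alpha> chi \<delta> \<xi>"
proof -
  let ?V = "unit_ball_vol (real CARD('d))"
  define r0 where "r0 = min (1/2) (1 / (2 * \<delta> * norm \<xi>))"
  have \<xi>0: "\<xi> \<noteq> 0" using \<xi> by (metis norm_zero not_one_le_zero)
  have nx: "norm \<xi> > 0" using \<xi> by linarith
  have r0ge: "1 / (2 * norm \<xi>) \<le> r0"
  proof -
    have "1 / (2 * norm \<xi>) \<le> 1/2" using \<xi> nx by (simp add: field_simps)
    moreover have "1 / (2 * norm \<xi>) \<le> 1 / (2 * \<delta> * norm \<xi>)"
      using \<delta> nx by (intro divide_left_mono mult_mono) auto
    ultimately show ?thesis by (simp add: r0_def)
  qed
  have pw: "(1 / (2 * norm \<xi>)) powr (2 - 2*\<alpha>) \<le> r0 powr (2 - 2*\<alpha>)"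
    using r0ge nx \<alpha>1 by (intro powr_mono2) auto
  have "(c_low TYPE('d) * norm \<xi> powr \<alpha>)\<^sup>2 = \<kappa> / 4 * ?V / (2 - 2*\<alpha>) * (2 powr (2*\<alpha> - 2) * norm \<xi> powr (2*\<alpha>))"
  proof -
    have "(norm \<xi> powr \<alpha>)\<^sup>2 = norm \<xi> powr \<alpha> * norm \<xi> powr \<alpha>"
      by (rule power2_eq_square)
    also have "\<dots> = norm \<xi> powr (\<alpha> + \<alpha>)" by (rule powr_add[symmetric])
    finally have "(norm \<xi> powr \<alpha>)\<^sup>2 = norm \<xi> powr (2*\<alpha>)" by simp
    moreover have "(c_low TYPE('d))\<^sup>2 = \<kappa> / 4 * ?V / (2 - 2*\<alpha>) * 2 powr (2*\<alpha> - 2)"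
      unfolding c_low_def using \<kappa> \<alpha>1 by simp
    ultimately show ?thesis by (simp only: power_mult_distrib mult_ac)
  qed
  also have "\<dots> = \<kappa> / 4 * ?V / (2 - 2*\<alpha>) * ((norm \<xi>)\<^sup>2 * (1 / (2 * norm \<xi>)) powr (2 - 2*\<alpha>))"
    by (simp only: powr_alg2[OF nx])
  also have "\<dots> \<le> \<kappa> / 4 * ?V / (2 - 2*\<alpha>) * ((norm \<xi>)\<^sup>2 * r0 powr (2 - 2*\<alpha>))"
  proof (intro mult_left_mono pw)
    show "0 \<le> (norm \<xi>)\<^sup>2" by simp
    show "0 \<le> \<kappa> / 4 * ?V / (2 - 2*\<alpha>)" using \<kappa> \<alpha>1 by simp
  qed
  also have "\<dots> = \<kappa> / 4 * (norm \<xi>)\<^sup>2 * ?V * (r0 powr (2 - 2*\<alpha>) / (2 - 2*\<alpha>))"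
    by (simp only: times_divide_eq_left times_divide_eq_right divide_divide_eq_left mult_ac)
  also have "\<dots> \<le> (omega \<kappa> \<alpha> chi \<delta> \<xi>)\<^sup>2"
    unfolding r0_def by (rule omega_low_sq[OF \<delta>(1) \<xi>0])
  finally show ?thesis
    using omega_sq(2)[OF \<delta>(1), of \<xi>] by (rule power2_le_imp_le)
qed

end


context pd
begin

lemma omega_lim:
  fixes \<xi> :: "real^'d" and S :: "nat \<Rightarrow> real"
  assumes S: "\<And>k. 0 < S k" "S \<longlonglongrightarrow> 0"
  shows "(\<lambda>k. omega \<kappa> \<alpha> chi (S k) \<xi>) \<longlonglongrightarrow> gamma_const TYPE('d) \<kappa> \<alpha> chi * norm \<xi>"
proof -
  let ?p = "real CARD('d) + 2*\<alpha>"
  let ?V = "unit_ball_vol (real CARD('d))"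
  define s where "s k z = chi (norm z) * (1 - cos (S k * (z \<bullet> \<xi>))) / norm z powr ?p / (S k)\<^sup>2" for k and z :: "real^'d"
  define f where "f z = chi (norm z) * (z \<bullet> \<xi>)\<^sup>2 / norm z powr ?p / 2" for z :: "real^'d"
  have sm[measurable]: "s k \<in> borel_measurable borel" for k unfolding s_def by measurable
  have fm[measurable]: "f \<in> borel_measurable borel" unfolding f_def by measurable
  have sq: "(omega \<kappa> \<alpha> chi (S k) \<xi>)\<^sup>2 = \<kappa> * (\<integral>z. s k z \<partial>lborel)" for k
  proof -
    have "(\<integral>z. s k z \<partial>lborel) = (\<integral>z. chi (norm z) * (1 - cos (S k * (z \<bullet> \<xi>))) / norm z powr ?p \<partial>lborel) / (S k)\<^sup>2"
      unfolding s_def by (rule Bochner_Integration.integral_divide_zero)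
    then show ?thesis using omega_sq(1)[OF S(1)[of k], of \<xi>] by simp
  qed
  have fint: "integrable lborel f"
    unfolding f_def by (rule Bochner_Integration.integrable_divide_zero[OF quad_chi(2)])
  have fval: "(\<integral>z. f z \<partial>lborel) = (norm \<xi>)\<^sup>2 * ?V * A / 2"
    unfolding f_def by (simp only: Bochner_Integration.integral_divide_zero quad_chi(1))
  have lim: "(\<lambda>k. \<integral>z. s k z \<partial>lborel) \<longlonglongrightarrow> (\<integral>z. f z \<partial>lborel)"
  proof (rule integral_dominated_convergence[where w=f])
    show "f \<in> borel_measurable lborel" by measurable
    show "s k \<in> borel_measurable lborel" for k by measurable
    show "integrable lborel f" by (rule fint)
    show "AE z in lborel. (\<lambda>k. s k z) \<longlonglongrightarrow> f z"
    proof (intro AE_I2)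
      fix z :: "real^'d"
      have S0: "S k \<noteq> 0" for k using S(1)[of k] by simp
      have "(\<lambda>k. chi (norm z) / norm z powr ?p * ((1 - cos (S k * (z \<bullet> \<xi>))) / (S k)\<^sup>2))
           \<longlonglongrightarrow> chi (norm z) / norm z powr ?p * ((z \<bullet> \<xi>)\<^sup>2 / 2)"
        by (intro tendsto_mult tendsto_const cos_quot_lim[OF S(2) S0])
      then show "(\<lambda>k. s k z) \<longlonglongrightarrow> f z"
        unfolding s_def f_def by (simp add: field_simps)
    qed
    show "AE z in lborel. norm (s k z) \<le> f z" for k
    proof (intro AE_I2)
      fix z :: "real^'d"
      have Sk: "(S k)\<^sup>2 > 0" using S(1)[of k] by simp
      have "chi (norm z) * (1 - cos (S k * (z \<bullet> \<xi>))) / norm z powr ?p \<le> (S k)\<^sup>2/2 * (chi (norm z) * (z \<bullet> \<xi>)\<^sup>2 / norm z powr ?p)"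
        by (rule psi_le)
      then have "chi (norm z) * (1 - cos (S k * (z \<bullet> \<xi>))) / norm z powr ?p / (S k)\<^sup>2
          \<le> ((S k)\<^sup>2/2 * (chi (norm z) * (z \<bullet> \<xi>)\<^sup>2 / norm z powr ?p)) / (S k)\<^sup>2"
        using Sk by (intro divide_right_mono) auto
      also have "\<dots> = chi (norm z) * (z \<bullet> \<xi>)\<^sup>2 / norm z powr ?p / 2"
        using Sk by simp
      finally have "s k z \<le> f z"
        unfolding s_def f_def .
      moreover have "0 \<le> s k z" unfolding s_def
        apply (rule divide_nonneg_nonneg)
         apply (rule psi_nonneg)
        apply simp
        done
      ultimately show "norm (s k z) \<le> f z" by simp
    qed
  qed
  have "(\<lambda>k. (omega \<kappa> \<alpha> chi (S k) \<xi>)\<^sup>2) \<longlonglongrightarrow> \<kappa> * ((norm \<xi>)\<^sup>2 * ?V * A / 2)"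
    unfolding sq fval[symmetric] by (intro tendsto_mult tendsto_const lim)
  also have "\<kappa> * ((norm \<xi>)\<^sup>2 * ?V * A / 2) = (gamma_const TYPE('d) \<kappa> \<alpha> chi * norm \<xi>)\<^sup>2"
    by (simp add: power_mult_distrib gamma_sq)
  finally have L: "(\<lambda>k. (omega \<kappa> \<alpha> chi (S k) \<xi>)\<^sup>2) \<longlonglongrightarrow> (gamma_const TYPE('d) \<kappa> \<alpha> chi * norm \<xi>)\<^sup>2" .
  have "(\<lambda>k. sqrt ((omega \<kappa> \<alpha> chi (S k) \<xi>)\<^sup>2)) \<longlonglongrightarrow> sqrt ((gamma_const TYPE('d) \<kappa> \<alpha> chi * norm \<xi>)\<^sup>2)"
    by (rule tendsto_real_sqrt[OF L])
  moreover have "sqrt ((omega \<kappa> \<alpha> chi (S k) \<xi>)\<^sup>2) = omega \<kappa> \<alpha> chi (S k) \<xi>" for k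
    using omega_sq(2)[OF S(1)[of k], of \<xi>] by simp
  moreover have "sqrt ((gamma_const TYPE('d) \<kappa> \<alpha> chi * norm \<xi>)\<^sup>2) = gamma_const TYPE('d) \<kappa> \<alpha> chi * norm \<xi>"
    using gamma_pos[where 'd='d] by simp
  ultimately show ?thesis by simp
qed

end


lemma cos_lip: "\<bar>cos x - cos y\<bar> \<le> \<bar>x - (y::real)\<bar>"
proof -
  have "\<bar>cos x - cos y\<bar> = 2 * \<bar>sin ((x + y) / 2)\<bar> * \<bar>sin ((y - x) / 2)\<bar>"
    by (simp add: cos_diff_cos abs_mult)
  also have "\<dots> \<le> 2 * 1 * \<bar>(y - x) / 2\<bar>"
    by (intro mult_mono abs_sin_x_le_abs_x) auto
  finally show ?thesis by simp
qed

lemma sin_lip: "\<bar>sin x - sin y\<bar> \<le> \<bar>x - (y::real)\<bar>"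
proof -
  have "\<bar>sin x - sin y\<bar> = 2 * \<bar>sin ((x - y) / 2)\<bar> * \<bar>cos ((x + y) / 2)\<bar>"
    by (simp add: sin_diff_sin abs_mult)
  also have "\<dots> \<le> 2 * \<bar>(x - y) / 2\<bar> * 1"
    by (intro mult_mono abs_sin_x_le_abs_x) auto
  finally show ?thesis by simp
qed

lemma sd_le_t: "0 \<le> w \<Longrightarrow> 0 \<le> t \<Longrightarrow> \<bar>sin_div w t\<bar> \<le> t"
proof -
  assume w: "0 \<le> w" and t: "0 \<le> t"
  show ?thesis
  proof (cases "w = 0")
    case True then show ?thesis using t by (simp add: sin_div_def)
  next
    case False
    then have w': "w > 0" using w by simp
    have "\<bar>sin (w * t)\<bar> \<le> w * t" using abs_sin_x_le_abs_x[of "w*t"] w t by simp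
    then show ?thesis using w' by (simp add: sin_div_def abs_divide divide_le_eq mult.commute)
  qed
qed

lemma sd_le_inv: "0 < w \<Longrightarrow> \<bar>sin_div w t\<bar> \<le> 1 / w"
  by (simp add: sin_div_def abs_divide divide_right_mono)

lemma sd_diff:
  fixes a b t T :: real
  assumes a: "0 < a" and b: "0 < b" and t: "0 \<le> t" "t \<le> T"
  shows "\<bar>sin_div a t - sin_div b t\<bar> \<le> T * \<bar>a - b\<bar> / a + \<bar>a - b\<bar> / (a * b)"
proof -
  have eq: "sin_div a t - sin_div b t = (sin (a*t) - sin (b*t)) / a + sin (b*t) * ((b - a) / (a * b))"
    using a b by (simp add: sin_div_def field_simps)
  have 1: "\<bar>(sin (a*t) - sin (b*t)) / a\<bar> \<le> T * \<bar>a - b\<bar> / a"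
  proof -
    have "\<bar>sin (a*t) - sin (b*t)\<bar> \<le> \<bar>a*t - b*t\<bar>" by (rule sin_lip)
    also have "\<dots> = t * \<bar>a - b\<bar>" using t by (metis abs_mult abs_of_nonneg left_diff_distrib mult.commute)
    also have "\<dots> \<le> T * \<bar>a - b\<bar>" using t by (intro mult_right_mono) auto
    finally show ?thesis using a by (simp add: abs_divide divide_right_mono)
  qed
  have 2: "\<bar>sin (b*t) * ((b - a) / (a * b))\<bar> \<le> \<bar>a - b\<bar> / (a * b)"
  proof -
    have "\<bar>sin (b*t) * ((b - a) / (a * b))\<bar> = \<bar>sin (b*t)\<bar> * (\<bar>a - b\<bar> / (a * b))"
      using a b by (simp add: abs_mult abs_divide abs_minus_commute)
    also have "\<dots> \<le> 1 * (\<bar>a - b\<bar> / (a * b))"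
      using a b by (intro mult_right_mono) auto
    finally show ?thesis by simp
  qed
  show ?thesis unfolding eq using 1 2 abs_triangle_ineq[of "(sin (a*t) - sin (b*t)) / a" "sin (b*t) * ((b - a) / (a * b))"]
    by linarith
qed

lemma cos_diff_T:
  fixes a b t T :: real
  assumes t: "0 \<le> t" "t \<le> T"
  shows "\<bar>cos (a*t) - cos (b*t)\<bar> \<le> min 2 (T * \<bar>a - b\<bar>)"
proof -
  have "\<bar>cos (a*t) - cos (b*t)\<bar> \<le> \<bar>a*t - b*t\<bar>" by (rule cos_lip)
  also have "\<dots> = t * \<bar>a - b\<bar>" using t by (metis abs_mult abs_of_nonneg left_diff_distrib mult.commute)
  also have "\<dots> \<le> T * \<bar>a - b\<bar>" using t by (intro mult_right_mono) auto
  finally have "\<bar>cos (a*t) - cos (b*t)\<bar> \<le> T * \<bar>a - b\<bar>" .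
  moreover have "\<bar>cos (a*t) - cos (b*t)\<bar> \<le> 2"
    using abs_triangle_ineq4[of "cos (a*t)" "cos (b*t)"] abs_cos_le_one[of "a*t"] abs_cos_le_one[of "b*t"] by linarith
  ultimately show ?thesis by simp
qed

lemma wsin_diff:
  fixes a b t T :: real
  assumes a: "0 \<le> a" and b: "0 \<le> b" and t: "0 \<le> t" "t \<le> T"
  shows "\<bar>a * sin (a*t) - b * sin (b*t)\<bar> \<le> min (a + b) (\<bar>a - b\<bar> + b * T * \<bar>a - b\<bar>)"
proof -
  have eq: "a * sin (a*t) - b * sin (b*t) = (a - b) * sin (a*t) + b * (sin (a*t) - sin (b*t))"
    by (simp add: algebra_simps)
  have 1: "\<bar>(a - b) * sin (a*t)\<bar> \<le> \<bar>a - b\<bar>"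
    using mult_left_le[OF abs_sin_le_one[of "a*t"] abs_ge_zero[of "a - b"]] by (simp add: abs_mult)
  have "\<bar>sin (a*t) - sin (b*t)\<bar> \<le> \<bar>a*t - b*t\<bar>" by (rule sin_lip)
  also have "\<dots> = t * \<bar>a - b\<bar>" using t by (metis abs_mult abs_of_nonneg left_diff_distrib mult.commute)
  also have "\<dots> \<le> T * \<bar>a - b\<bar>" using t by (intro mult_right_mono) auto
  finally have 2: "\<bar>b * (sin (a*t) - sin (b*t))\<bar> \<le> b * T * \<bar>a - b\<bar>"
    using b by (simp add: abs_mult mult.assoc mult_left_mono)
  have A: "\<bar>a * sin (a*t) - b * sin (b*t)\<bar> \<le> \<bar>a - b\<bar> + b * T * \<bar>a - b\<bar>"
    unfolding eq using 1 2 abs_triangle_ineq[of "(a - b) * sin (a*t)" "b * (sin (a*t) - sin (b*t))"] by linarith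
  have "\<bar>a * sin (a*t)\<bar> \<le> a" using a mult_left_le[OF abs_sin_le_one, of a "a*t"] by (simp add: abs_mult)
  moreover have "\<bar>b * sin (b*t)\<bar> \<le> b" using b mult_left_le[OF abs_sin_le_one, of b "b*t"] by (simp add: abs_mult)
  ultimately have B: "\<bar>a * sin (a*t) - b * sin (b*t)\<bar> \<le> a + b"
    using abs_triangle_ineq4[of "a * sin (a*t)" "b * sin (b*t)"] by linarith
  show ?thesis using A B by simp
qed

lemma norm2_comb:
  fixes x y :: "'a::real_normed_vector"
  assumes "\<bar>c\<bar> \<le> C" "\<bar>d\<bar> \<le> D"
  shows "(norm (c *\<^sub>R x + d *\<^sub>R y))\<^sup>2 \<le> 2 * C\<^sup>2 * (norm x)\<^sup>2 + 2 * D\<^sup>2 * (norm y)\<^sup>2"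
proof -
  have "norm (c *\<^sub>R x + d *\<^sub>R y) \<le> \<bar>c\<bar> * norm x + \<bar>d\<bar> * norm y"
    using norm_triangle_ineq[of "c *\<^sub>R x" "d *\<^sub>R y"] by simp
  also have "\<dots> \<le> C * norm x + D * norm y"
    using assms by (intro add_mono mult_right_mono) auto
  finally have n: "norm (c *\<^sub>R x + d *\<^sub>R y) \<le> C * norm x + D * norm y" .
  have "(norm (c *\<^sub>R x + d *\<^sub>R y))\<^sup>2 \<le> (C * norm x + D * norm y)\<^sup>2"
    using n by (intro power_mono) auto
  also have "\<dots> \<le> 2 * C\<^sup>2 * (norm x)\<^sup>2 + 2 * D\<^sup>2 * (norm y)\<^sup>2"
    using sum_squares_ge_zero[of "C * norm x - D * norm y" 0] 
    by (simp add: power2_eq_square algebra_simps)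
  finally show ?thesis .
qed


locale mc = pd \<kappa> \<alpha> chi for \<kappa> \<alpha> chi +
  fixes s T :: real and u0 v0 :: "real^'d::finite \<Rightarrow> complex^'d"
  assumes u0: "in_Hs s u0" and v0: "in_Hs (s - \<alpha>) v0" and T: "0 \<le> T"
begin

definition gam where "gam = gamma_const TYPE('d) \<kappa> \<alpha> chi"

lemma gam_pos: "gam > 0" unfolding gam_def by (rule gamma_pos)

definition "cl = min (c_low TYPE('d)) gam"
definition "C1 = 2 * T\<^sup>2 + 2 / cl\<^sup>2"
definition K :: "real^'d \<Rightarrow> real" where "K \<xi> = (if 1 \<le> norm \<xi> then 1 / (cl * norm \<xi> powr \<alpha>) else T)"
definition P :: "real^'d \<Rightarrow> real" where "P \<xi> = 1 + (norm \<xi>)\<^sup>2"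

lemma cl_pos: "cl > 0"
  unfolding cl_def using c_low_pos[where 'd='d] gam_pos by simp

lemma u0m[measurable]: "u0 \<in> borel_measurable borel"
  using u0 by (simp add: in_Hs_def)
lemma v0m[measurable]: "v0 \<in> borel_measurable borel"
  using v0 by (simp add: in_Hs_def)

lemma P_ge1: "P \<xi> \<ge> 1" unfolding P_def by simp

lemma K_nonneg: "K \<xi> \<ge> 0"
  unfolding K_def using cl_pos T by simp

lemma omega0: "0 < \<delta> \<Longrightarrow> omega \<kappa> \<alpha> chi \<delta> (0::real^'d) = 0"
  using omega_up[of \<delta> "0::real^'d"] omega_sq(2)[of \<delta> "0::real^'d"] by simp

lemma sd_K:
  assumes \<delta>: "0 < \<delta>" "\<delta> \<le> 1" and t: "0 \<le> t" "t \<le> T"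
  shows "\<bar>sin_div (omega \<kappa> \<alpha> chi \<delta> \<xi>) t\<bar> \<le> K \<xi>" and "\<bar>sin_div (gam * norm \<xi>) t\<bar> \<le> K \<xi>"
proof -
  have a0: "0 \<le> omega \<kappa> \<alpha> chi \<delta> \<xi>" by (rule omega_sq(2)[OF \<delta>(1)])
  have b0: "0 \<le> gam * norm \<xi>" using gam_pos by simp
  have "\<bar>sin_div (omega \<kappa> \<alpha> chi \<delta> \<xi>) t\<bar> \<le> K \<xi> \<and> \<bar>sin_div (gam * norm \<xi>) t\<bar> \<le> K \<xi>"
  proof (cases "1 \<le> norm \<xi>")
    case True
    have nx: "norm \<xi> > 0" using True by linarith
    have y: "norm \<xi> powr \<alpha> > 0" using nx by simp
    have low: "cl * norm \<xi> powr \<alpha> > 0" using cl_pos y by simp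
    have "cl * norm \<xi> powr \<alpha> \<le> c_low TYPE('d) * norm \<xi> powr \<alpha>"
      unfolding cl_def using y by (intro mult_right_mono) auto
    also have "\<dots> \<le> omega \<kappa> \<alpha> chi \<delta> \<xi>" by (rule omega_low[OF \<delta> True])
    finally have ha: "cl * norm \<xi> powr \<alpha> \<le> omega \<kappa> \<alpha> chi \<delta> \<xi>" .
    have "norm \<xi> powr \<alpha> \<le> norm \<xi> powr 1"
      using True \<alpha>1 by (intro powr_mono) auto
    then have "norm \<xi> powr \<alpha> \<le> norm \<xi>" using nx by simp
    then have "cl * norm \<xi> powr \<alpha> \<le> gam * norm \<xi>"
      unfolding cl_def using y gam_pos by (intro mult_mono) auto
    note hb = this
    have "\<bar>sin_div (omega \<kappa> \<alpha> chi \<delta> \<xi>) t\<bar> \<le> 1 / omega \<kappa> \<alpha> chi \<delta> \<xi>"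
      using ha low by (intro sd_le_inv) linarith
    also have "\<dots> \<le> 1 / (cl * norm \<xi> powr \<alpha>)"
      using ha low by (intro divide_left_mono) auto
    finally have A: "\<bar>sin_div (omega \<kappa> \<alpha> chi \<delta> \<xi>) t\<bar> \<le> K \<xi>" using True by (simp add: K_def)
    have "\<bar>sin_div (gam * norm \<xi>) t\<bar> \<le> 1 / (gam * norm \<xi>)"
      using hb low by (intro sd_le_inv) linarith
    also have "\<dots> \<le> 1 / (cl * norm \<xi> powr \<alpha>)"
      using hb low by (intro divide_left_mono) auto
    finally have B: "\<bar>sin_div (gam * norm \<xi>) t\<bar> \<le> K \<xi>" using True by (simp add: K_def)
    show ?thesis using A B by simp
  next
    case False
    then show ?thesis using sd_le_t[OF a0 t(1)] sd_le_t[OF b0 t(1)] t by (simp add: K_def)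
  qed
  then show "\<bar>sin_div (omega \<kappa> \<alpha> chi \<delta> \<xi>) t\<bar> \<le> K \<xi>" and "\<bar>sin_div (gam * norm \<xi>) t\<bar> \<le> K \<xi>"
    by auto
qed

lemma KC: "P \<xi> powr s * (K \<xi>)\<^sup>2 \<le> C1 * P \<xi> powr (s - \<alpha>)"
proof -
  have P1: "P \<xi> \<ge> 1" by (rule P_ge1)
  have split: "P \<xi> powr s = P \<xi> powr (s - \<alpha>) * P \<xi> powr \<alpha>"
    using P1 by (simp add: powr_add[symmetric])
  have key: "(K \<xi>)\<^sup>2 * P \<xi> powr \<alpha> \<le> C1"
  proof (cases "1 \<le> norm \<xi>")
    case True
    have nx: "norm \<xi> > 0" using True by linarith
    define y where "y = norm \<xi> powr \<alpha>"
    have y: "y > 0" using nx by (simp add: y_def)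
    have "P \<xi> \<le> 2 * (norm \<xi>)\<^sup>2"
    proof -
      have "1 \<le> (norm \<xi>)\<^sup>2" using True by (simp add: one_le_power)
      then show ?thesis unfolding P_def by linarith
    qed
    then have "P \<xi> powr \<alpha> \<le> (2 * (norm \<xi>)\<^sup>2) powr \<alpha>"
      using P1 \<alpha>0 by (intro powr_mono2) auto
    also have "\<dots> = 2 powr \<alpha> * ((norm \<xi>) powr 2) powr \<alpha>"
      using nx by (simp add: powr_mult powr_numeral)
    also have "((norm \<xi>) powr 2) powr \<alpha> = y\<^sup>2"
    proof -
      have "((norm \<xi>) powr 2) powr \<alpha> = norm \<xi> powr (2 * \<alpha>)" by (rule powr_powr)
      also have "\<dots> = norm \<xi> powr (\<alpha> + \<alpha>)" by simp
      also have "\<dots> = y * y" unfolding y_def by (rule powr_add)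
      finally show ?thesis by (simp add: power2_eq_square)
    qed
    also have "2 powr \<alpha> \<le> 2 powr 1" using \<alpha>1 by (intro powr_mono) auto
    then have "2 powr \<alpha> * y\<^sup>2 \<le> 2 * y\<^sup>2" by (intro mult_right_mono) auto
    finally have Pa: "P \<xi> powr \<alpha> \<le> 2 * y\<^sup>2" .
    have "(K \<xi>)\<^sup>2 = 1 / (cl\<^sup>2 * y\<^sup>2)" using True by (simp add: K_def y_def power_divide power_mult_distrib)
    then have "(K \<xi>)\<^sup>2 * P \<xi> powr \<alpha> \<le> 1 / (cl\<^sup>2 * y\<^sup>2) * (2 * y\<^sup>2)"
      using Pa by (metis mult_left_mono zero_le_divide_1_iff zero_le_mult_iff zero_le_power2)
    also have "\<dots> = 2 / cl\<^sup>2" using y cl_pos by (simp add: field_simps)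
    also have "\<dots> \<le> C1" unfolding C1_def by simp
    finally show ?thesis .
  next
    case False
    have "(norm \<xi>)\<^sup>2 \<le> 1" using False by (intro power_le_one) auto
    then have "P \<xi> \<le> 2" unfolding P_def by simp
    then have "P \<xi> powr \<alpha> \<le> 2 powr \<alpha>" using P1 \<alpha>0 by (intro powr_mono2) auto
    also have "2 powr \<alpha> \<le> 2 powr 1" using \<alpha>1 by (intro powr_mono) auto
    finally have Pa: "P \<xi> powr \<alpha> \<le> 2" by simp
    have "(K \<xi>)\<^sup>2 * P \<xi> powr \<alpha> = T\<^sup>2 * P \<xi> powr \<alpha>" using False by (simp add: K_def)
    also have "\<dots> \<le> T\<^sup>2 * 2" using Pa by (intro mult_left_mono) auto
    also have "\<dots> \<le> C1" unfolding C1_def using cl_pos by simp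
    finally show ?thesis .
  qed
  have "P \<xi> powr s * (K \<xi>)\<^sup>2 = P \<xi> powr (s - \<alpha>) * ((K \<xi>)\<^sup>2 * P \<xi> powr \<alpha>)"
    unfolding split by (simp add: mult_ac)
  also have "\<dots> \<le> P \<xi> powr (s - \<alpha>) * C1"
    using key by (intro mult_left_mono) auto
  finally show ?thesis by (simp add: mult_ac)
qed

end


context mc
begin

definition e1 :: "real \<Rightarrow> real^'d \<Rightarrow> real" where
  "e1 \<delta> \<xi> = min 2 (T * \<bar>omega \<kappa> \<alpha> chi \<delta> \<xi> - gam * norm \<xi>\<bar>)"
definition e2 :: "real \<Rightarrow> real^'d \<Rightarrow> real" where
  "e2 \<delta> \<xi> = min (2 * K \<xi>) (if \<xi> = 0 then 0 else
      T * \<bar>omega \<kappa> \<alpha> chi \<delta> \<xi> - gam * norm \<xi>\<bar> / omega \<kappa> \<alpha> chi \<delta> \<xi> +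
      \<bar>omega \<kappa> \<alpha> chi \<delta> \<xi> - gam * norm \<xi>\<bar> / (omega \<kappa> \<alpha> chi \<delta> \<xi> * (gam * norm \<xi>)))"
definition e3 :: "real \<Rightarrow> real^'d \<Rightarrow> real" where
  "e3 \<delta> \<xi> = min (2 * (gam * norm \<xi>))
     (\<bar>omega \<kappa> \<alpha> chi \<delta> \<xi> - gam * norm \<xi>\<bar> + gam * norm \<xi> * T * \<bar>omega \<kappa> \<alpha> chi \<delta> \<xi> - gam * norm \<xi>\<bar>)"
definition H1 :: "real \<Rightarrow> real^'d \<Rightarrow> real" where
  "H1 \<delta> \<xi> = P \<xi> powr s * (2 * (e1 \<delta> \<xi>)\<^sup>2 * (norm (u0 \<xi>))\<^sup>2 + 2 * (e2 \<delta> \<xi>)\<^sup>2 * (norm (v0 \<xi>))\<^sup>2)"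
definition H2 :: "real \<Rightarrow> real^'d \<Rightarrow> real" where
  "H2 \<delta> \<xi> = P \<xi> powr (s - 1) * (2 * (e3 \<delta> \<xi>)\<^sup>2 * (norm (u0 \<xi>))\<^sup>2 + 2 * (e1 \<delta> \<xi>)\<^sup>2 * (norm (v0 \<xi>))\<^sup>2)"
definition G1 :: "real^'d \<Rightarrow> real" where
  "G1 \<xi> = 8 * (P \<xi> powr s * (norm (u0 \<xi>))\<^sup>2) + 8 * C1 * (P \<xi> powr (s - \<alpha>) * (norm (v0 \<xi>))\<^sup>2)"
definition G2 :: "real^'d \<Rightarrow> real" where
  "G2 \<xi> = 8 * gam\<^sup>2 * (P \<xi> powr s * (norm (u0 \<xi>))\<^sup>2) + 8 * (P \<xi> powr (s - \<alpha>) * (norm (v0 \<xi>))\<^sup>2)"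

lemma e_bounds:
  assumes \<delta>: "0 < \<delta>" "\<delta> \<le> 1"
  shows "0 \<le> e1 \<delta> \<xi>" "e1 \<delta> \<xi> \<le> 2" "0 \<le> e2 \<delta> \<xi>" "e2 \<delta> \<xi> \<le> 2 * K \<xi>"
    "0 \<le> e3 \<delta> \<xi>" "e3 \<delta> \<xi> \<le> 2 * (gam * norm \<xi>)"
proof -
  have gp: "gam > 0" by (rule gam_pos)
  show "0 \<le> e1 \<delta> \<xi>" "e1 \<delta> \<xi> \<le> 2" unfolding e1_def using T by auto
  show "0 \<le> e3 \<delta> \<xi>" "e3 \<delta> \<xi> \<le> 2 * (gam * norm \<xi>)" unfolding e3_def using T gp by auto
  show "e2 \<delta> \<xi> \<le> 2 * K \<xi>" unfolding e2_def by simp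
  show "0 \<le> e2 \<delta> \<xi>"
  proof (cases "\<xi> = 0")
    case True then show ?thesis unfolding e2_def using K_nonneg[of \<xi>] by simp
  next
    case False
    have a: "omega \<kappa> \<alpha> chi \<delta> \<xi> > 0" by (rule omega_pos[OF \<delta>(1) False])
    have b: "gam * norm \<xi> > 0" using gp False by simp
    show ?thesis unfolding e2_def using False a b K_nonneg[of \<xi>] T by simp
  qed
qed

lemma pt1:
  assumes \<delta>: "0 < \<delta>" "\<delta> \<le> 1" and t: "0 \<le> t" "t \<le> T"
  shows "(1 + (norm \<xi>)\<^sup>2) powr s * (norm (sol_hat (omega \<kappa> \<alpha> chi \<delta>) u0 v0 t \<xi> - sol_hat (\<lambda>\<xi>. gam * norm \<xi>) u0 v0 t \<xi>))\<^sup>2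
         \<le> H1 \<delta> \<xi>"
proof -
  define a where "a = omega \<kappa> \<alpha> chi \<delta> \<xi>"
  define b where "b = gam * norm \<xi>"
  have diff: "sol_hat (omega \<kappa> \<alpha> chi \<delta>) u0 v0 t \<xi> - sol_hat (\<lambda>\<xi>. gam * norm \<xi>) u0 v0 t \<xi>
      = (cos (a * t) - cos (b * t)) *\<^sub>R u0 \<xi> + (sin_div a t - sin_div b t) *\<^sub>R v0 \<xi>"
    by (simp add: sol_hat_def a_def b_def algebra_simps)
  have c: "\<bar>cos (a * t) - cos (b * t)\<bar> \<le> e1 \<delta> \<xi>"
    unfolding e1_def a_def[symmetric] b_def[symmetric] by (rule cos_diff_T[OF t])
  have d: "\<bar>sin_div a t - sin_div b t\<bar> \<le> e2 \<delta> \<xi>"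
  proof (cases "\<xi> = 0")
    case True
    then have "a = 0" "b = 0" unfolding a_def b_def using omega0[OF \<delta>(1)] by auto
    then show ?thesis using e_bounds(3)[OF \<delta>, of \<xi>] by simp
  next
    case False
    have ap: "a > 0" unfolding a_def by (rule omega_pos[OF \<delta>(1) False])
    have bp: "b > 0" unfolding b_def using gam_pos False by simp
    have 1: "\<bar>sin_div a t - sin_div b t\<bar> \<le> T * \<bar>a - b\<bar> / a + \<bar>a - b\<bar> / (a * b)"
      by (rule sd_diff[OF ap bp t])
    have 2: "\<bar>sin_div a t - sin_div b t\<bar> \<le> 2 * K \<xi>"
      using sd_K[OF \<delta> t, of \<xi>] abs_triangle_ineq4[of "sin_div a t" "sin_div b t"]
      unfolding a_def b_def by linarith
    show ?thesis unfolding e2_def using 1 2 False by (simp add: a_def b_def)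
  qed
  have "(norm (sol_hat (omega \<kappa> \<alpha> chi \<delta>) u0 v0 t \<xi> - sol_hat (\<lambda>\<xi>. gam * norm \<xi>) u0 v0 t \<xi>))\<^sup>2
      \<le> 2 * (e1 \<delta> \<xi>)\<^sup>2 * (norm (u0 \<xi>))\<^sup>2 + 2 * (e2 \<delta> \<xi>)\<^sup>2 * (norm (v0 \<xi>))\<^sup>2"
    unfolding diff by (rule norm2_comb[OF c d])
  then show ?thesis unfolding H1_def P_def by (intro mult_left_mono) auto
qed

lemma pt2:
  assumes \<delta>: "0 < \<delta>" "\<delta> \<le> 1" and t: "0 \<le> t" "t \<le> T"
  shows "(1 + (norm \<xi>)\<^sup>2) powr (s - 1) * (norm (sol_dt_hat (omega \<kappa> \<alpha> chi \<delta>) u0 v0 t \<xi> - sol_dt_hat (\<lambda>\<xi>. gam * norm \<xi>) u0 v0 t \<xi>))\<^sup>2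
         \<le> H2 \<delta> \<xi>"
proof -
  define a where "a = omega \<kappa> \<alpha> chi \<delta> \<xi>"
  define b where "b = gam * norm \<xi>"
  have diff: "sol_dt_hat (omega \<kappa> \<alpha> chi \<delta>) u0 v0 t \<xi> - sol_dt_hat (\<lambda>\<xi>. gam * norm \<xi>) u0 v0 t \<xi>
      = (- (a * sin (a * t) - b * sin (b * t))) *\<^sub>R u0 \<xi> + (cos (a * t) - cos (b * t)) *\<^sub>R v0 \<xi>"
    by (simp add: sol_dt_hat_def a_def b_def algebra_simps)
  have c: "\<bar>cos (a * t) - cos (b * t)\<bar> \<le> e1 \<delta> \<xi>"
    unfolding e1_def a_def[symmetric] b_def[symmetric] by (rule cos_diff_T[OF t])
  have a0: "0 \<le> a" unfolding a_def by (rule omega_sq(2)[OF \<delta>(1)])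
  have ab: "a \<le> b" unfolding a_def b_def gam_def by (rule omega_up[OF \<delta>(1)])
  have b0: "0 \<le> b" using a0 ab by simp
  have w: "\<bar>a * sin (a*t) - b * sin (b*t)\<bar> \<le> min (a + b) (\<bar>a - b\<bar> + b * T * \<bar>a - b\<bar>)"
    by (rule wsin_diff[OF a0 b0 t])
  have d: "\<bar>- (a * sin (a * t) - b * sin (b * t))\<bar> \<le> e3 \<delta> \<xi>"
    using w ab unfolding e3_def a_def[symmetric] b_def[symmetric] by auto
  have "(norm (sol_dt_hat (omega \<kappa> \<alpha> chi \<delta>) u0 v0 t \<xi> - sol_dt_hat (\<lambda>\<xi>. gam * norm \<xi>) u0 v0 t \<xi>))\<^sup>2
      \<le> 2 * (e3 \<delta> \<xi>)\<^sup>2 * (norm (u0 \<xi>))\<^sup>2 + 2 * (e1 \<delta> \<xi>)\<^sup>2 * (norm (v0 \<xi>))\<^sup>2"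
    unfolding diff by (rule norm2_comb[OF d c])
  then show ?thesis unfolding H2_def P_def by (intro mult_left_mono) auto
qed


lemma dom1:
  assumes \<delta>: "0 < \<delta>" "\<delta> \<le> 1"
  shows "0 \<le> H1 \<delta> \<xi>" "H1 \<delta> \<xi> \<le> G1 \<xi>"
proof -
  note eb = e_bounds[OF \<delta>, of \<xi>]
  have Pp: "0 \<le> P \<xi> powr s" by simp
  show "0 \<le> H1 \<delta> \<xi>" unfolding H1_def by (intro mult_nonneg_nonneg add_nonneg_nonneg) auto
  have e1s: "(e1 \<delta> \<xi>)\<^sup>2 \<le> 4" using eb(1,2) power_mono[of "e1 \<delta> \<xi>" 2 2] by simp
  have e2s: "(e2 \<delta> \<xi>)\<^sup>2 \<le> 4 * (K \<xi>)\<^sup>2" using eb(3,4) power_mono[of "e2 \<delta> \<xi>" "2 * K \<xi>" 2]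
    by (simp add: power_mult_distrib)
  have "H1 \<delta> \<xi> \<le> P \<xi> powr s * (2 * 4 * (norm (u0 \<xi>))\<^sup>2 + 2 * (4 * (K \<xi>)\<^sup>2) * (norm (v0 \<xi>))\<^sup>2)"
    unfolding H1_def using e1s e2s
    by (intro mult_left_mono add_mono mult_right_mono) auto
  also have "\<dots> = 8 * (P \<xi> powr s * (norm (u0 \<xi>))\<^sup>2) + 8 * (P \<xi> powr s * (K \<xi>)\<^sup>2) * (norm (v0 \<xi>))\<^sup>2"
    by (simp add: algebra_simps)
  also have "\<dots> \<le> 8 * (P \<xi> powr s * (norm (u0 \<xi>))\<^sup>2) + 8 * (C1 * P \<xi> powr (s - \<alpha>)) * (norm (v0 \<xi>))\<^sup>2"
    using KC[of \<xi>] by (intro add_mono mult_right_mono mult_left_mono) auto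
  also have "\<dots> = G1 \<xi>" unfolding G1_def by (simp add: mult_ac)
  finally show "H1 \<delta> \<xi> \<le> G1 \<xi>" .
qed

lemma dom2:
  assumes \<delta>: "0 < \<delta>" "\<delta> \<le> 1"
  shows "0 \<le> H2 \<delta> \<xi>" "H2 \<delta> \<xi> \<le> G2 \<xi>"
proof -
  note eb = e_bounds[OF \<delta>, of \<xi>]
  show "0 \<le> H2 \<delta> \<xi>" unfolding H2_def by (intro mult_nonneg_nonneg add_nonneg_nonneg) auto
  have P1: "P \<xi> \<ge> 1" by (rule P_ge1)
  have e1s: "(e1 \<delta> \<xi>)\<^sup>2 \<le> 4" using eb(1,2) power_mono[of "e1 \<delta> \<xi>" 2 2] by simp
  have e3s: "(e3 \<delta> \<xi>)\<^sup>2 \<le> 4 * gam\<^sup>2 * P \<xi>"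
  proof -
    have "(e3 \<delta> \<xi>)\<^sup>2 \<le> (2 * (gam * norm \<xi>))\<^sup>2" using eb(5,6) by (intro power_mono) auto
    also have "\<dots> = 4 * gam\<^sup>2 * (norm \<xi>)\<^sup>2" by (simp add: power_mult_distrib)
    also have "\<dots> \<le> 4 * gam\<^sup>2 * P \<xi>" unfolding P_def by (intro mult_left_mono) auto
    finally show ?thesis .
  qed
  have PP: "P \<xi> powr (s - 1) * P \<xi> = P \<xi> powr s"
  proof -
    have "P \<xi> powr (s - 1) * P \<xi> = P \<xi> powr (s - 1) * P \<xi> powr 1" using P1 by simp
    also have "\<dots> = P \<xi> powr (s - 1 + 1)" by (rule powr_add[symmetric])
    finally show ?thesis by simp
  qed
  have Pm: "P \<xi> powr (s - 1) \<le> P \<xi> powr (s - \<alpha>)"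
    using P1 \<alpha>1 by (intro powr_mono) auto
  have "H2 \<delta> \<xi> \<le> P \<xi> powr (s - 1) * (2 * (4 * gam\<^sup>2 * P \<xi>) * (norm (u0 \<xi>))\<^sup>2 + 2 * 4 * (norm (v0 \<xi>))\<^sup>2)"
    unfolding H2_def using e1s e3s
    by (intro mult_left_mono add_mono mult_right_mono) auto
  also have "\<dots> = 8 * gam\<^sup>2 * ((P \<xi> powr (s - 1) * P \<xi>) * (norm (u0 \<xi>))\<^sup>2) + 8 * (P \<xi> powr (s - 1) * (norm (v0 \<xi>))\<^sup>2)"
    by (simp add: algebra_simps)
  also have "\<dots> \<le> 8 * gam\<^sup>2 * (P \<xi> powr s * (norm (u0 \<xi>))\<^sup>2) + 8 * (P \<xi> powr (s - \<alpha>) * (norm (v0 \<xi>))\<^sup>2)"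
    unfolding PP using Pm by (intro add_mono mult_left_mono mult_right_mono) auto
  also have "\<dots> = G2 \<xi>" unfolding G2_def ..
  finally show "H2 \<delta> \<xi> \<le> G2 \<xi>" .
qed

lemma H_meas[measurable]: "H1 \<delta> \<in> borel_measurable borel" "H2 \<delta> \<in> borel_measurable borel"
proof -
  have [measurable]: "omega \<kappa> \<alpha> chi \<delta> \<in> (borel_measurable borel :: (real^'d \<Rightarrow> real) set)"
    by (rule omega_meas)
  have [measurable]: "K \<in> borel_measurable borel" unfolding K_def[abs_def] by measurable
  have [measurable]: "P \<in> borel_measurable borel" unfolding P_def[abs_def] by measurable
  have [measurable]: "e1 \<delta> \<in> borel_measurable borel" unfolding e1_def[abs_def] by measurable
  have [measurable]: "e2 \<delta> \<in> borel_measurable borel" unfolding e2_def[abs_def] by measurable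
  have [measurable]: "e3 \<delta> \<in> borel_measurable borel" unfolding e3_def[abs_def] by measurable
  show "H1 \<delta> \<in> borel_measurable borel" unfolding H1_def[abs_def] by measurable
  show "H2 \<delta> \<in> borel_measurable borel" unfolding H2_def[abs_def] by measurable
qed

lemma Hs_int: "integrable lborel (\<lambda>\<xi>. P \<xi> powr s * (norm (u0 \<xi>))\<^sup>2)"
  and Hsa_int: "integrable lborel (\<lambda>\<xi>. P \<xi> powr (s - \<alpha>) * (norm (v0 \<xi>))\<^sup>2)"
proof -
  have [measurable]: "P \<in> borel_measurable borel" unfolding P_def[abs_def] by measurable
  show "integrable lborel (\<lambda>\<xi>. P \<xi> powr s * (norm (u0 \<xi>))\<^sup>2)"
    by (rule integrableI_nonneg) (use u0 in \<open>auto simp: in_Hs_def Hs_normsq_def P_def\<close>)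
  show "integrable lborel (\<lambda>\<xi>. P \<xi> powr (s - \<alpha>) * (norm (v0 \<xi>))\<^sup>2)"
    by (rule integrableI_nonneg) (use v0 in \<open>auto simp: in_Hs_def Hs_normsq_def P_def\<close>)
qed

lemma G_int: "integrable lborel G1" "integrable lborel G2"
proof -
  show "integrable lborel G1" unfolding G1_def[abs_def] using Hs_int Hsa_int by auto
  show "integrable lborel G2" unfolding G2_def[abs_def] using Hs_int Hsa_int by auto
qed

end


context mc
begin

lemma H_lim:
  assumes S: "\<And>k. 0 < S k" "S \<longlonglongrightarrow> 0"
  shows "(\<lambda>k. H1 (S k) \<xi>) \<longlonglongrightarrow> 0" "(\<lambda>k. H2 (S k) \<xi>) \<longlonglongrightarrow> 0"
proof -
  define b where "b = gam * norm \<xi>"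
  have b0: "0 \<le> b" unfolding b_def using gam_pos by simp
  have om: "(\<lambda>k. omega \<kappa> \<alpha> chi (S k) \<xi>) \<longlonglongrightarrow> b"
    unfolding b_def gam_def by (rule omega_lim[OF S])
  have d: "(\<lambda>k. \<bar>omega \<kappa> \<alpha> chi (S k) \<xi> - b\<bar>) \<longlonglongrightarrow> 0"
  proof -
    have "(\<lambda>k. omega \<kappa> \<alpha> chi (S k) \<xi> - b) \<longlonglongrightarrow> b - b" by (intro tendsto_diff om tendsto_const)
    then have "(\<lambda>k. \<bar>omega \<kappa> \<alpha> chi (S k) \<xi> - b\<bar>) \<longlonglongrightarrow> \<bar>b - b\<bar>" by (rule tendsto_rabs)
    then show ?thesis by simp
  qed
  have E1: "(\<lambda>k. e1 (S k) \<xi>) \<longlonglongrightarrow> 0"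
  proof -
    have "(\<lambda>k. min 2 (T * \<bar>omega \<kappa> \<alpha> chi (S k) \<xi> - b\<bar>)) \<longlonglongrightarrow> min 2 (T * 0)"
      by (intro tendsto_min tendsto_const tendsto_mult d)
    then show ?thesis by (simp add: e1_def b_def)
  qed
  have E3: "(\<lambda>k. e3 (S k) \<xi>) \<longlonglongrightarrow> 0"
  proof -
    have "(\<lambda>k. min (2 * b) (\<bar>omega \<kappa> \<alpha> chi (S k) \<xi> - b\<bar> + b * T * \<bar>omega \<kappa> \<alpha> chi (S k) \<xi> - b\<bar>)) \<longlonglongrightarrow> min (2 * b) (0 + b * T * 0)"
      by (intro tendsto_min tendsto_const tendsto_mult tendsto_add d)
    then show ?thesis using b0 by (simp add: e3_def b_def)
  qed
  have E2: "(\<lambda>k. e2 (S k) \<xi>) \<longlonglongrightarrow> 0"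
  proof (cases "\<xi> = 0")
    case True
    then show ?thesis using K_nonneg[of \<xi>] by (simp add: e2_def)
  next
    case False
    have bp: "b > 0" unfolding b_def using gam_pos False by simp
    have "(\<lambda>k. min (2 * K \<xi>) (T * \<bar>omega \<kappa> \<alpha> chi (S k) \<xi> - b\<bar> / omega \<kappa> \<alpha> chi (S k) \<xi> +
        \<bar>omega \<kappa> \<alpha> chi (S k) \<xi> - b\<bar> / (omega \<kappa> \<alpha> chi (S k) \<xi> * b)))
        \<longlonglongrightarrow> min (2 * K \<xi>) (T * 0 / b + 0 / (b * b))"
      using bp by (intro tendsto_min tendsto_const tendsto_add tendsto_divide tendsto_mult d om) auto
    then show ?thesis using False K_nonneg[of \<xi>] by (simp add: e2_def b_def)
  qed
  have "(\<lambda>k. H1 (S k) \<xi>) \<longlonglongrightarrow> P \<xi> powr s * (2 * 0\<^sup>2 * (norm (u0 \<xi>))\<^sup>2 + 2 * 0\<^sup>2 * (norm (v0 \<xi>))\<^sup>2)"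
    unfolding H1_def by (intro tendsto_intros E1 E2)
  then show "(\<lambda>k. H1 (S k) \<xi>) \<longlonglongrightarrow> 0" by simp
  have "(\<lambda>k. H2 (S k) \<xi>) \<longlonglongrightarrow> P \<xi> powr (s - 1) * (2 * 0\<^sup>2 * (norm (u0 \<xi>))\<^sup>2 + 2 * 0\<^sup>2 * (norm (v0 \<xi>))\<^sup>2)"
    unfolding H2_def by (intro tendsto_intros E1 E3)
  then show "(\<lambda>k. H2 (S k) \<xi>) \<longlonglongrightarrow> 0" by simp
qed

lemma H_int:
  assumes \<delta>: "0 < \<delta>" "\<delta> \<le> 1"
  shows "integrable lborel (H1 \<delta>)" "integrable lborel (H2 \<delta>)"
proof -
  show "integrable lborel (H1 \<delta>)"
  proof (rule Bochner_Integration.integrable_bound[OF G_int(1)])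
    show "H1 \<delta> \<in> borel_measurable lborel" by simp
    show "AE x in lborel. norm (H1 \<delta> x) \<le> norm (G1 x)"
    proof (intro AE_I2)
      fix x
      have h: "0 \<le> H1 \<delta> x" "H1 \<delta> x \<le> G1 x" using dom1[OF \<delta>] by auto
      then have "0 \<le> G1 x" by linarith
      with h show "norm (H1 \<delta> x) \<le> norm (G1 x)" by simp
    qed
  qed
  show "integrable lborel (H2 \<delta>)"
  proof (rule Bochner_Integration.integrable_bound[OF G_int(2)])
    show "H2 \<delta> \<in> borel_measurable lborel" by simp
    show "AE x in lborel. norm (H2 \<delta> x) \<le> norm (G2 x)"
    proof (intro AE_I2)
      fix x
      have h: "0 \<le> H2 \<delta> x" "H2 \<delta> x \<le> G2 x" using dom2[OF \<delta>] by auto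
      then have "0 \<le> G2 x" by linarith
      with h show "norm (H2 \<delta> x) \<le> norm (G2 x)" by simp
    qed
  qed
qed

lemma Hs_le:
  fixes f :: "real^'d \<Rightarrow> complex^'d" and H :: "real^'d \<Rightarrow> real" and r :: real
  assumes H[measurable]: "H \<in> borel_measurable borel" and Hi: "integrable lborel H" and H0: "\<And>\<xi>. 0 \<le> H \<xi>"
    and le: "\<And>\<xi>. (1 + (norm \<xi>)\<^sup>2) powr r * (norm (f \<xi>))\<^sup>2 \<le> H \<xi>"
  shows "Hs_norm r f \<le> sqrt (\<integral>\<xi>. H \<xi> \<partial>lborel)"
proof -
  have "Hs_normsq r f \<le> (\<integral>\<^sup>+\<xi>. ennreal (H \<xi>) \<partial>lborel)"
    unfolding Hs_normsq_def by (intro nn_integral_mono ennreal_leI le)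
  also have "\<dots> = ennreal (\<integral>\<xi>. H \<xi> \<partial>lborel)"
    by (rule nn_integral_eq_integral[OF Hi]) (simp add: H0)
  finally have "Hs_normsq r f \<le> ennreal (\<integral>\<xi>. H \<xi> \<partial>lborel)" .
  then have "enn2real (Hs_normsq r f) \<le> (\<integral>\<xi>. H \<xi> \<partial>lborel)"
    by (rule enn2real_leI[rotated]) (simp add: Bochner_Integration.integral_nonneg H0)
  then show ?thesis unfolding Hs_norm_def by simp
qed

lemma B_lim: "((\<lambda>\<delta>. sqrt (\<integral>\<xi>. H1 \<delta> \<xi> \<partial>lborel) + sqrt (\<integral>\<xi>. H2 \<delta> \<xi> \<partial>lborel)) \<longlongrightarrow> 0) (at_right 0)"
proof (rule tendsto_at_right_sequentially[of 0 1])
  show "(0::real) < 1" by simp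
  fix S :: "nat \<Rightarrow> real"
  assume S: "\<And>n. 0 < S n" "\<And>n. S n < 1" "antimono_on UNIV S" "S \<longlonglongrightarrow> 0"
  have S1: "S n \<le> 1" for n using S(2)[of n] by simp
  have I1: "(\<lambda>n. \<integral>\<xi>. H1 (S n) \<xi> \<partial>lborel) \<longlonglongrightarrow> (\<integral>\<xi>. 0 \<partial>(lborel::(real^'d) measure))"
  proof (rule integral_dominated_convergence[where w=G1])
    show "(\<lambda>\<xi>::real^'d. 0::real) \<in> borel_measurable lborel" by simp
    show "H1 (S n) \<in> borel_measurable lborel" for n by simp
    show "integrable lborel G1" by (rule G_int)
    show "AE \<xi> in lborel. (\<lambda>n. H1 (S n) \<xi>) \<longlonglongrightarrow> 0"
      using H_lim(1)[OF S(1) S(4)] by simp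
    show "AE \<xi> in lborel. norm (H1 (S n) \<xi>) \<le> G1 \<xi>" for n
      using dom1[OF S(1) S1] by (intro AE_I2) simp
  qed
  have I2: "(\<lambda>n. \<integral>\<xi>. H2 (S n) \<xi> \<partial>lborel) \<longlonglongrightarrow> (\<integral>\<xi>. 0 \<partial>(lborel::(real^'d) measure))"
  proof (rule integral_dominated_convergence[where w=G2])
    show "(\<lambda>\<xi>::real^'d. 0::real) \<in> borel_measurable lborel" by simp
    show "H2 (S n) \<in> borel_measurable lborel" for n by simp
    show "integrable lborel G2" by (rule G_int)
    show "AE \<xi> in lborel. (\<lambda>n. H2 (S n) \<xi>) \<longlonglongrightarrow> 0"
      using H_lim(2)[OF S(1) S(4)] by simp
    show "AE \<xi> in lborel. norm (H2 (S n) \<xi>) \<le> G2 \<xi>" for n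
      using dom2[OF S(1) S1] by (intro AE_I2) simp
  qed
  have "(\<lambda>n. sqrt (\<integral>\<xi>. H1 (S n) \<xi> \<partial>lborel) + sqrt (\<integral>\<xi>. H2 (S n) \<xi> \<partial>lborel)) \<longlonglongrightarrow> sqrt 0 + sqrt 0"
    using I1 I2 by (intro tendsto_add tendsto_real_sqrt) auto
  then show "(\<lambda>n. sqrt (\<integral>\<xi>. H1 (S n) \<xi> \<partial>lborel) + sqrt (\<integral>\<xi>. H2 (S n) \<xi> \<partial>lborel)) \<longlonglongrightarrow> 0" by simp
qed

lemma main_mc:
  "((\<lambda>\<delta>. SUP t\<in>{0..T}.
            Hs_norm s (\<lambda>\<xi>. sol_hat (omega \<kappa> \<alpha> chi \<delta>) u0 v0 t \<xi> - sol_hat (\<lambda>\<xi>. gam * norm \<xi>) u0 v0 t \<xi>)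
          + Hs_norm (s - 1) (\<lambda>\<xi>. sol_dt_hat (omega \<kappa> \<alpha> chi \<delta>) u0 v0 t \<xi> - sol_dt_hat (\<lambda>\<xi>. gam * norm \<xi>) u0 v0 t \<xi>))
         \<longlongrightarrow> 0) (at_right 0)"
proof -
  define F where "F \<delta> t = Hs_norm s (\<lambda>\<xi>. sol_hat (omega \<kappa> \<alpha> chi \<delta>) u0 v0 t \<xi> - sol_hat (\<lambda>\<xi>. gam * norm \<xi>) u0 v0 t \<xi>)
          + Hs_norm (s - 1) (\<lambda>\<xi>. sol_dt_hat (omega \<kappa> \<alpha> chi \<delta>) u0 v0 t \<xi> - sol_dt_hat (\<lambda>\<xi>. gam * norm \<xi>) u0 v0 t \<xi>)" for \<delta> t
  define B where "B \<delta> = sqrt (\<integral>\<xi>. H1 \<delta> \<xi> \<partial>lborel) + sqrt (\<integral>\<xi>. H2 \<delta> \<xi> \<partial>lborel)" for \<delta>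
  have F0: "0 \<le> F \<delta> t" for \<delta> t unfolding F_def Hs_norm_def by (intro add_nonneg_nonneg real_sqrt_ge_zero enn2real_nonneg)
  have FB: "F \<delta> t \<le> B \<delta>" if \<delta>: "0 < \<delta>" "\<delta> \<le> 1" and t: "t \<in> {0..T}" for \<delta> t
  proof -
    have t': "0 \<le> t" "t \<le> T" using t by auto
    show ?thesis unfolding F_def B_def
    proof (intro add_mono)
      show "Hs_norm s (\<lambda>\<xi>. sol_hat (omega \<kappa> \<alpha> chi \<delta>) u0 v0 t \<xi> - sol_hat (\<lambda>\<xi>. gam * norm \<xi>) u0 v0 t \<xi>) \<le> sqrt (\<integral>\<xi>. H1 \<delta> \<xi> \<partial>lborel)"
        by (rule Hs_le[OF H_meas(1) H_int(1)[OF \<delta>] dom1(1)[OF \<delta>] pt1[OF \<delta> t']])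
      show "Hs_norm (s - 1) (\<lambda>\<xi>. sol_dt_hat (omega \<kappa> \<alpha> chi \<delta>) u0 v0 t \<xi> - sol_dt_hat (\<lambda>\<xi>. gam * norm \<xi>) u0 v0 t \<xi>) \<le> sqrt (\<integral>\<xi>. H2 \<delta> \<xi> \<partial>lborel)"
        by (rule Hs_le[OF H_meas(2) H_int(2)[OF \<delta>] dom2(1)[OF \<delta>] pt2[OF \<delta> t']])
    qed
  qed
  have ev: "\<forall>\<^sub>F \<delta> in at_right 0. 0 < \<delta> \<and> \<delta> < (1::real)"
    unfolding eventually_at_right_field by (intro exI[of _ 1]) auto
  have "((\<lambda>\<delta>. SUP t\<in>{0..T}. F \<delta> t) \<longlongrightarrow> 0) (at_right 0)"
  proof (rule tendsto_sandwich[where f="\<lambda>_. 0" and h=B])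
    show "\<forall>\<^sub>F \<delta> in at_right 0. 0 \<le> (SUP t\<in>{0..T}. F \<delta> t)"
      using ev
    proof eventually_elim
      case (elim \<delta>)
      have "bdd_above (F \<delta> ` {0..T})"
        using FB[of \<delta>] elim by (intro bdd_aboveI2[where M="B \<delta>"]) auto
      then have "F \<delta> 0 \<le> (SUP t\<in>{0..T}. F \<delta> t)" using T by (intro cSUP_upper) auto
      then show ?case using F0[of \<delta> 0] by linarith
    qed
    show "\<forall>\<^sub>F \<delta> in at_right 0. (SUP t\<in>{0..T}. F \<delta> t) \<le> B \<delta>"
      using ev
    proof eventually_elim
      case (elim \<delta>)
      show ?case using T FB[of \<delta>] elim by (intro cSUP_least) auto
    qed
    show "((\<lambda>_. 0) \<longlongrightarrow> (0::real)) (at_right 0)" by simp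
    show "(B \<longlongrightarrow> 0) (at_right 0)" unfolding B_def[abs_def] by (rule B_lim)
  qed
  then show ?thesis unfolding F_def .
qed

end


theorem theorem1p3:
  fixes \<kappa> \<alpha> s T :: real and chi :: "real \<Rightarrow> real"
    and u0 v0 :: "real^'d \<Rightarrow> complex^'d"
  assumes "\<kappa> > 0" and "0 < \<alpha>" and "\<alpha> < 1"
    and "chi \<in> borel_measurable borel"
    and "\<And>x. 0 \<le> chi x" and "\<And>x. chi x \<le> 1"
    and "\<And>x. \<bar>x\<bar> > 1 \<Longrightarrow> chi x = 0"
    and "\<And>x. \<bar>x\<bar> \<le> 1/2 \<Longrightarrow> chi x = 1"
    and "in_Hs s u0" and "real_valued_hat u0"
    and "in_Hs (s - \<alpha>) v0" and "real_valued_hat v0"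
    and "0 \<le> T"
  shows "((\<lambda>\<delta>. SUP t\<in>{0..T}.
            Hs_norm s (\<lambda>\<xi>. sol_hat (omega \<kappa> \<alpha> chi \<delta>) u0 v0 t \<xi>
                        - sol_hat (\<lambda>\<xi>. gamma_const TYPE('d) \<kappa> \<alpha> chi * norm \<xi>) u0 v0 t \<xi>)
          + Hs_norm (s - 1) (\<lambda>\<xi>. sol_dt_hat (omega \<kappa> \<alpha> chi \<delta>) u0 v0 t \<xi>
                        - sol_dt_hat (\<lambda>\<xi>. gamma_const TYPE('d) \<kappa> \<alpha> chi * norm \<xi>) u0 v0 t \<xi>))
         \<longlongrightarrow> 0) (at_right 0)"
proof -
  interpret mc \<kappa> \<alpha> chi s T u0 v0
    by unfold_locales (use assms in auto)
  show ?thesis using main_mc unfolding gam_def .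
qed

end
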